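(* Let $N$ and $M$ be sub-sound WF nets with disjoint node sets and let $n$ be a node of $N$ such that either $n$ is a place and $M$ is a pWF net, or $n$ is a transition and $M$ is a tWF net. Then $N\otimes_n M$ is a sub-sound WF net.
   Context: Petri nets and markings. A Petri net is a triple $(P,T,F)$ with $P$ a finite set of places, $T$ a finite set of transitions, $P\cap T=\emptyset$, and $F\subseteq (P\times T)\cup(T\times P)$. For a node $x$, $\bullet x=\{y\mid (y,x)\in F\}$, $x\bullet=\{y\mid (x,y)\in F\}$. A marking is a multiset over $P$ (a function $P\to\mathbb N$); sets of places are identified with bags of multiplicity one, $+,-,\le$ are pointwise, and $k.m$ is the sum of $k$ copies of $m$. Transition $t$ is enabled at $m$ iff $\bullet t\le m$, firing gives $m-\bullet t+t\bullet$, and $m\xrightarrow{*}m'$ denotes reachability by a finite (possibly empty) firing sequence. Workflow nets. A pWF net is $(P,T,F,I,O)$ with $(P,T,F)$ a Petri net, $I,O\subseteq P$ non-empty, every node reachable by a directed path from some node of $I$, and some node of $O$ reachable from every node. A tWF net is the same with $I,O$ non-empty subsets of $T$. Input nodes may have incoming edges and output nodes outgoing edges. A WF net is a pWF or tWF net. The place-completion $\mathrm{pc}(N)$ of a tWF net $N=(P,T,F,I,O)$ is obtained by adding two fresh places $p_i,p_o$ with edges $(p_i,t)$ for all $t\in I$ and $(t,p_o)$ for all $t\in O$, and taking input set $\{p_i\}$ and output set $\{p_o\}$. Sub-soundness. A pWF net is sub-sound if for all integers $k\ge k'\ge 0$ and every marking $m'$: if $k.I\xrightarrow{*}m'+k'.O$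 then $m'\xrightarrow{*}(k-k').O$. A tWF net is sub-sound iff its place-completion is. Substitution. Let $N=(P,T,F,I,O)$ and $M=(P',T',F',I',O')$ be WF nets with disjoint node sets. If $p\in P$ and $M$ is a pWF net, $N\otimes_p M$ is obtained from $N$ by deleting $p$ and all edges incident to $p$, adding all nodes and edges of $M$, adding an edge $(t,p')$ for each $t\in\bullet_N p$ and each $p'\in I'$, and an edge $(p',t)$ for each $p'\in O'$ and each $t\in p\bullet_N$; its input set is $(I\setminus\{p\})\cup I'$ if $p\in I$ and $I$ otherwise, and its output set is $(O\setminus\{p\})\cup O'$ if $p\in O$ and $O$ otherwise. If $t\in T$ and $M$ is a tWF net, $N\otimes_t M$ is defined analogously: delete $t$ and its edges, add $M$, add $(q,t')$ for each $q\in\bullet_N t$, $t'\in I'$, and $(t',q)$ for each $t'\in O'$, $q\in t\bullet_N$, with input/output sets updated in the same way. *)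

theory Defs
  imports "HOL-Library.Multiset"
begin

record 'a wfnet =
  places :: "'a set"
  trans  :: "'a set"
  flow   :: "'a rel"
  ins    :: "'a set"
  outs   :: "'a set"

definition petri_net :: "'a set \<Rightarrow> 'a set \<Rightarrow> 'a rel \<Rightarrow> bool" where
  "petri_net P T F \<longleftrightarrow> finite P \<and> finite T \<and> P \<inter> T = {} \<and> F \<subseteq> (P \<times> T) \<union> (T \<times> P)"

definition preset :: "'a rel \<Rightarrow> 'a \<Rightarrow> 'a set" where
  "preset F x = {y. (y, x) \<in> F}"

definition postset :: "'a rel \<Rightarrow> 'a \<Rightarrow> 'a set" where
  "postset F x = {y. (x, y) \<in> F}"

definition nodes :: "'a wfnet \<Rightarrow> 'a set" where
  "nodes N = places N \<union> trans N"

definition wf_conn :: "'a wfnet \<Rightarrow> bool" where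
  "wf_conn N \<longleftrightarrow> petri_net (places N) (trans N) (flow N) \<and>
     ins N \<noteq> {} \<and> outs N \<noteq> {} \<and>
     (\<forall>x \<in> nodes N. \<exists>i \<in> ins N. (i, x) \<in> (flow N)\<^sup>*) \<and>
     (\<forall>x \<in> nodes N. \<exists>q \<in> outs N. (x, q) \<in> (flow N)\<^sup>*)"

definition pWF :: "'a wfnet \<Rightarrow> bool" where
  "pWF N \<longleftrightarrow> wf_conn N \<and> ins N \<subseteq> places N \<and> outs N \<subseteq> places N"

definition tWF :: "'a wfnet \<Rightarrow> bool" where
  "tWF N \<longleftrightarrow> wf_conn N \<and> ins N \<subseteq> trans N \<and> outs N \<subseteq> trans N"

definition WF :: "'a wfnet \<Rightarrow> bool" where
  "WF N \<longleftrightarrow> pWF N \<or> tWF N"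

text \<open>Markings are multisets; a set of places is the bag of multiplicity one.\<close>
definition enabled :: "'a wfnet \<Rightarrow> 'a \<Rightarrow> 'a multiset \<Rightarrow> bool" where
  "enabled N t m \<longleftrightarrow> mset_set (preset (flow N) t) \<subseteq># m"

definition fire :: "'a wfnet \<Rightarrow> 'a \<Rightarrow> 'a multiset \<Rightarrow> 'a multiset" where
  "fire N t m = m - mset_set (preset (flow N) t) + mset_set (postset (flow N) t)"

definition step :: "'a wfnet \<Rightarrow> 'a multiset \<Rightarrow> 'a multiset \<Rightarrow> bool" where
  "step N m m' \<longleftrightarrow> (\<exists>t \<in> trans N. enabled N t m \<and> m' = fire N t m)"

definition reach :: "'a wfnet \<Rightarrow> 'a multiset \<Rightarrow> 'a multiset \<Rightarrow> bool" where
  "reach N = (step N)\<^sup>*\<^sup>*"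

definition sub_sound_p :: "'a wfnet \<Rightarrow> bool" where
  "sub_sound_p N \<longleftrightarrow>
     (\<forall>k k' m'. k' \<le> k \<longrightarrow> set_mset m' \<subseteq> places N \<longrightarrow>
        reach N (repeat_mset k (mset_set (ins N))) (m' + repeat_mset k' (mset_set (outs N))) \<longrightarrow>
        reach N m' (repeat_mset (k - k') (mset_set (outs N))))"

text \<open>Place completion of a tWF net; old nodes are tagged Inl, the fresh places
p_i and p_o are Inr False and Inr True.\<close>
definition pc :: "'a wfnet \<Rightarrow> ('a + bool) wfnet" where
  "pc N = \<lparr> places = Inl ` places N \<union> {Inr False, Inr True},
            trans = Inl ` trans N,
            flow = map_prod Inl Inl ` flow N
                   \<union> {(Inr False, Inl t) | t. t \<in> ins N}
                   \<union> {(Inl t, Inr True) | t. t \<in> outs N},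
            ins = {Inr False},
            outs = {Inr True} \<rparr>"

definition sub_sound :: "'a wfnet \<Rightarrow> bool" where
  "sub_sound N \<longleftrightarrow> (pWF N \<and> sub_sound_p N) \<or> (tWF N \<and> sub_sound_p (pc N))"

text \<open>Substitution N \<otimes>_n M (uniform for the place and the transition case).\<close>
definition subst :: "'a wfnet \<Rightarrow> 'a \<Rightarrow> 'a wfnet \<Rightarrow> 'a wfnet" where
  "subst N n M = \<lparr> places = (places N - {n}) \<union> places M,
      trans = (trans N - {n}) \<union> trans M,
      flow = {(x, y). (x, y) \<in> flow N \<and> x \<noteq> n \<and> y \<noteq> n} \<union> flow M
             \<union> {(x, y). x \<in> preset (flow N) n \<and> y \<in> ins M}
             \<union> {(x, y). x \<in> outs M \<and> y \<in> postset (flow N) n},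
      ins = (if n \<in> ins N then (ins N - {n}) \<union> ins M else ins N),
      outs = (if n \<in> outs N then (outs N - {n}) \<union> outs M else outs N) \<rparr>"

end

theory Submission
  imports Defs
begin


lemma petri_finite_flow: "petri_net P T F \<Longrightarrow> finite F"
  unfolding petri_net_def by (meson finite_SigmaI finite_Un finite_subset)

lemma finite_preset: "finite F \<Longrightarrow> finite (preset F x)"
proof -
  assume "finite F"
  have "preset F x \<subseteq> fst ` F" unfolding preset_def by force
  thus ?thesis using \<open>finite F\<close> by (meson finite_imageI finite_subset)
qed

lemma finite_postset: "finite F \<Longrightarrow> finite (postset F x)"
proof -
  assume "finite F"
  have "postset F x \<subseteq> snd ` F" unfolding postset_def by force
  thus ?thesis using \<open>finite F\<close> by (meson finite_imageI finite_subset)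
qed

lemma fire_add: "enabled N t m \<Longrightarrow> fire N t (m + x) = fire N t m + x"
  unfolding enabled_def fire_def
  apply (clarsimp simp: multiset_eq_iff subseteq_mset_def)
  subgoal for a by (erule allE[of _ a]) linarith
  done

lemma step_add: "step N m m' \<Longrightarrow> step N (m + x) (m' + x)"
proof -
  assume "step N m m'"
  then obtain t where t: "t \<in> trans N" "enabled N t m" "m' = fire N t m" unfolding step_def by blast
  have "enabled N t (m + x)" using t(2) unfolding enabled_def
    using subset_mset.order_trans by fastforce
  thus ?thesis unfolding step_def using t fire_add by metis
qed

lemma reach_add1: "reach N m m' \<Longrightarrow> reach N (m + x) (m' + x)"
  unfolding reach_def
  by (induction rule: rtranclp_induct) (auto intro: rtranclp.rtrancl_into_rtrancl step_add)

lemma reach_trans: "reach N a b \<Longrightarrow> reach N b c \<Longrightarrow> reach N a c"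
  unfolding reach_def by auto

lemma reach_refl[simp]: "reach N a a"
  unfolding reach_def by auto

lemma reach_add: "reach N a b \<Longrightarrow> reach N c d \<Longrightarrow> reach N (a + c) (b + d)"
  by (metis reach_add1 reach_trans union_commute)

lemma reach_repeat: "reach N x y \<Longrightarrow> reach N (repeat_mset k x) (repeat_mset k y)"
  by (induction k) (auto intro: reach_add)



lemma in_mset_setD: "x \<in># mset_set A \<Longrightarrow> x \<in> A"
  by (cases "finite A") auto

lemma in_repeatD: "x \<in># repeat_mset k m \<Longrightarrow> x \<in># m"
  by (metis count_repeat_mset mult_0_right not_in_iff)

lemma flow_cases: "petri_net P T F \<Longrightarrow> (x,y) \<in> F \<Longrightarrow> (x \<in> P \<and> y \<in> T) \<or> (x \<in> T \<and> y \<in> P)"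
  unfolding petri_net_def by blast

lemma postset_places: "petri_net (places N) (trans N) (flow N) \<Longrightarrow> t \<in> trans N \<Longrightarrow> postset (flow N) t \<subseteq> places N"
  unfolding postset_def petri_net_def by blast

lemma preset_places: "petri_net (places N) (trans N) (flow N) \<Longrightarrow> t \<in> trans N \<Longrightarrow> preset (flow N) t \<subseteq> places N"
  unfolding preset_def petri_net_def by blast

lemma step_places:
  assumes pn: "petri_net (places N) (trans N) (flow N)" and "set_mset m \<subseteq> places N" and "step N m m'"
  shows "set_mset m' \<subseteq> places N"
proof -
  obtain t where t: "t \<in> trans N" "m' = fire N t m" using assms(3) unfolding step_def by blast
  have fin: "finite (postset (flow N) t)" by (rule finite_postset[OF petri_finite_flow[OF pn]])
  have "set_mset m' \<subseteq> set_mset m \<union> postset (flow N) t"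
    unfolding t fire_def using fin by (auto dest: in_diffD)
  thus ?thesis using assms(2) postset_places[OF pn t(1)] by blast
qed

lemma reach_places:
  assumes pn: "petri_net (places N) (trans N) (flow N)" and "set_mset m \<subseteq> places N" and "reach N m m'"
  shows "set_mset m' \<subseteq> places N"
  using assms(3,2) unfolding reach_def
  by (induction rule: rtranclp_induct) (auto dest: step_places[OF pn])

lemma reach_zero:
  assumes post: "\<And>t. t \<in> trans N \<Longrightarrow> finite (postset (flow N) t) \<and> postset (flow N) t \<noteq> {}"
    and "reach N m {#}"
  shows "m = {#}"
  using assms(2) unfolding reach_def
proof (induction rule: converse_rtranclp_induct)
  case base then show ?case by simp
next
  case (step y z)
  then obtain t where t: "t \<in> trans N" "z = fire N t y" unfolding step_def by blast
  have "mset_set (postset (flow N) t) \<noteq> {#}" using post[OF t(1)] by (simp add: mset_set_empty_iff)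
  hence "z \<noteq> {#}" unfolding t fire_def by simp
  thus ?case using step by simp
qed

lemma pWF_petri: "pWF N \<Longrightarrow> petri_net (places N) (trans N) (flow N)"
  unfolding pWF_def wf_conn_def by blast

lemma pWF_post:
  assumes "pWF N" "t \<in> trans N"
  shows "finite (postset (flow N) t) \<and> postset (flow N) t \<noteq> {}"
proof
  have pn: "petri_net (places N) (trans N) (flow N)" using assms pWF_petri by blast
  thus "finite (postset (flow N) t)" by (rule finite_postset[OF petri_finite_flow])
  have "t \<in> nodes N" using assms unfolding nodes_def by blast
  then obtain q where q: "q \<in> outs N" "(t,q) \<in> (flow N)\<^sup>*" using assms unfolding pWF_def wf_conn_def by blast
  have "q \<in> places N" using q assms unfolding pWF_def by blast
  hence "t \<noteq> q" using pn assms unfolding petri_net_def by blast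
  then obtain y where "(t,y) \<in> flow N" using q(2) by (metis converse_rtranclE)
  thus "postset (flow N) t \<noteq> {}" unfolding postset_def by blast
qed

lemma sound_use:
  "sub_sound_p N \<Longrightarrow> k' \<le> k \<Longrightarrow> set_mset m \<subseteq> places N \<Longrightarrow>
   reach N (repeat_mset k (mset_set (ins N))) (m + repeat_mset k' (mset_set (outs N))) \<Longrightarrow>
   reach N m (repeat_mset (k - k') (mset_set (outs N)))"
  unfolding sub_sound_p_def by blast

lemma pWF_fin_ins: "pWF N \<Longrightarrow> finite (ins N)"
  unfolding pWF_def wf_conn_def petri_net_def by (meson finite_subset)
lemma pWF_fin_outs: "pWF N \<Longrightarrow> finite (outs N)"
  unfolding pWF_def wf_conn_def petri_net_def by (meson finite_subset)

lemma one_sound: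
  assumes "pWF N" "sub_sound_p N"
  shows "reach N (mset_set (ins N)) (mset_set (outs N))"
proof -
  have "set_mset (mset_set (ins N)) \<subseteq> places N" using assms unfolding pWF_def by (auto dest: in_mset_setD)
  from sound_use[OF assms(2) _ this, of 0 1] show ?thesis by simp
qed

lemma bound:
  assumes "pWF N" "sub_sound_p N" "set_mset x \<subseteq> places N"
    and "reach N (repeat_mset a (mset_set (ins N))) (x + repeat_mset c (mset_set (outs N)))"
  shows "c \<le> a"
proof (rule ccontr)
  assume "\<not> c \<le> a"
  hence c: "c = (c - a) + a" by simp
  let ?m = "x + repeat_mset (c - a) (mset_set (outs N))"
  have "repeat_mset c (mset_set (outs N)) = repeat_mset (c-a) (mset_set (outs N)) + repeat_mset a (mset_set (outs N))"
    by (subst c) (simp add: repeat_mset_distrib)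
  hence r: "reach N (repeat_mset a (mset_set (ins N))) (?m + repeat_mset a (mset_set (outs N)))"
    using assms(4) by (simp add: add.assoc)
  have "set_mset ?m \<subseteq> places N" using assms(1,3) unfolding pWF_def by (auto dest!: in_repeatD in_mset_setD)
  from sound_use[OF assms(2) le_refl this r] have "reach N ?m {#}" by simp
  hence "?m = {#}" using reach_zero pWF_post[OF assms(1)] by blast
  moreover have "mset_set (outs N) \<noteq> {#}" using assms(1) pWF_fin_outs
    unfolding pWF_def wf_conn_def by (simp add: mset_set_empty_iff)
  ultimately show False using \<open>\<not> c \<le> a\<close>
    by (simp add: repeat_mset_eq_empty_iff)
qed



lemma filter_all: "(\<forall>x\<in>#A. P x) \<Longrightarrow> filter_mset P A = A"
  by (induction A) auto
lemma filter_none: "(\<forall>x\<in>#A. \<not> P x) \<Longrightarrow> filter_mset P A = {#}"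
  by (induction A) auto
lemma filter_fire: "A \<subseteq># m \<Longrightarrow> filter_mset P (m - A + B) = filter_mset P m - filter_mset P A + filter_mset P B"
  by (auto simp: multiset_eq_iff subseteq_mset_def)
lemma filter_sub: "A \<subseteq># m \<Longrightarrow> filter_mset P A = A \<Longrightarrow> A \<subseteq># filter_mset P m"
  by (metis multiset_filter_mono)

lemma flow_nodes: "petri_net (places N) (trans N) (flow N) \<Longrightarrow> (x,y) \<in> flow N \<Longrightarrow> x \<in> nodes N \<and> y \<in> nodes N"
  unfolding petri_net_def nodes_def by blast

locale psub =
  fixes N M :: "'a wfnet" and n :: 'a
  assumes pnN: "petri_net (places N) (trans N) (flow N)"
    and insN: "ins N \<subseteq> places N" and outsN: "outs N \<subseteq> places N"
    and nP: "n \<in> places N"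
    and ssN: "sub_sound_p N"
    and pM: "pWF M" and ssM: "sub_sound_p M"
    and disj: "nodes N \<inter> nodes M = {}"
begin

abbreviation "C \<equiv> subst N n M"

lemma pnM: "petri_net (places M) (trans M) (flow M)" using pM pWF_petri by blast
lemma insM: "ins M \<subseteq> places M" and outsM: "outs M \<subseteq> places M" using pM unfolding pWF_def by auto

lemma finN: "finite (places N)" "finite (trans N)" "finite (flow N)"
  using pnN petri_finite_flow unfolding petri_net_def by auto
lemma finM: "finite (places M)" "finite (trans M)" "finite (flow M)"
  using pnM petri_finite_flow unfolding petri_net_def by auto
lemma fin_sets: "finite (ins N)" "finite (outs N)" "finite (ins M)" "finite (outs M)"
  using finN finM insN outsN insM outsM finite_subset by blast+

lemma nT: "n \<notin> trans N" using nP pnN unfolding petri_net_def by blast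

lemma PTN: "places N \<inter> trans N = {}" using pnN unfolding petri_net_def by blast
lemma PTM: "places M \<inter> trans M = {}" using pnM unfolding petri_net_def by blast
lemma dPP: "places N \<inter> places M = {}" and dPT: "places N \<inter> trans M = {}"
  and dTP: "trans N \<inter> places M = {}" and dTT: "trans N \<inter> trans M = {}"
  using disj unfolding nodes_def by blast+

lemma trans_C: "trans C = trans N \<union> trans M" using nT unfolding subst_def by auto
lemma places_C: "places C = (places N - {n}) \<union> places M" unfolding subst_def by auto

lemma fN: "(x,y) \<in> flow N \<Longrightarrow> (x \<in> places N \<and> y \<in> trans N) \<or> (x \<in> trans N \<and> y \<in> places N)"
  using flow_cases[OF pnN] by blast
lemma fM: "(x,y) \<in> flow M \<Longrightarrow> (x \<in> places M \<and> y \<in> trans M) \<or> (x \<in> trans M \<and> y \<in> places M)"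
  using flow_cases[OF pnM] by blast

lemma preC_M: assumes t: "t \<in> trans M" shows "preset (flow C) t = preset (flow M) t"
proof -
  have a: "(x,t) \<notin> flow N" for x using fN[of x t] t dPT dTT by blast
  have b: "t \<notin> ins M" using insM t PTM by blast
  show ?thesis using a b unfolding subst_def preset_def postset_def by auto
qed
lemma postC_M: assumes t: "t \<in> trans M" shows "postset (flow C) t = postset (flow M) t"
proof -
  have a: "(t,x) \<notin> flow N" for x using fN[of t x] t dPT dTT by blast
  have b: "t \<notin> outs M" using outsM t PTM by blast
  show ?thesis using a b unfolding subst_def preset_def postset_def by auto
qed
lemma preC_N: assumes t: "t \<in> trans N" shows "preset (flow C) t =
   (preset (flow N) t - {n}) \<union> (if n \<in> preset (flow N) t then outs M else {})"
proof -
  have a: "(x,t) \<notin> flow M" for x using fM[of x t] t dTP dTT by blast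
  have b: "t \<notin> ins M" using insM t dTP by blast
  show ?thesis using a b nT t unfolding subst_def preset_def postset_def by auto
qed
lemma postC_N: assumes t: "t \<in> trans N" shows "postset (flow C) t =
   (postset (flow N) t - {n}) \<union> (if n \<in> postset (flow N) t then ins M else {})"
proof -
  have a: "(t,x) \<notin> flow M" for x using fM[of t x] t dTP dTT by blast
  have b: "t \<notin> outs M" using outsM t dTP by blast
  show ?thesis using a b nT t unfolding subst_def preset_def postset_def by auto
qed

end


lemma step_fire: "t \<in> trans N \<Longrightarrow> step N (mset_set (preset (flow N) t) + R) (R + mset_set (postset (flow N) t))"
  unfolding step_def enabled_def fire_def by (rule bexI[of _ t]) auto

lemma mset_set_split: "finite S \<Longrightarrow> mset_set S = mset_set (S - {n}) + (if n \<in> S then {#n#} else {#})"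
  by (auto simp: mset_set.remove)

lemma step_E: "step N m m' \<Longrightarrow> (\<And>t R. t \<in> trans N \<Longrightarrow> m = mset_set (preset (flow N) t) + R \<Longrightarrow>
    m' = R + mset_set (postset (flow N) t) \<Longrightarrow> P) \<Longrightarrow> P"
  unfolding step_def enabled_def fire_def
  by (metis add_diff_cancel_left' subset_mset.le_iff_add)

context psub begin

definition "fNm m = filter_mset (\<lambda>p. p \<notin> places M) m"
definition "fMm m = filter_mset (\<lambda>p. p \<in> places M) m"

lemma fNm_add[simp]: "fNm (a + b) = fNm a + fNm b" unfolding fNm_def by simp
lemma fMm_add[simp]: "fMm (a + b) = fMm a + fMm b" unfolding fMm_def by simp
lemma fNm_M: "set_mset a \<subseteq> places M \<Longrightarrow> fNm a = {#}" unfolding fNm_def by (rule filter_none) auto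
lemma fMm_M: "set_mset a \<subseteq> places M \<Longrightarrow> fMm a = a" unfolding fMm_def by (rule filter_all) auto
lemma fNm_N: "set_mset a \<subseteq> places N \<Longrightarrow> fNm a = a" unfolding fNm_def using dPP by (intro filter_all) auto
lemma fMm_N: "set_mset a \<subseteq> places N \<Longrightarrow> fMm a = {#}" unfolding fMm_def using dPP by (intro filter_none) auto
lemma fNM_split: "m = fNm m + fMm m" unfolding fNm_def fMm_def
  by (metis add.commute multiset_partition)

lemma ms_sub: "set_mset (mset_set S) \<subseteq> S" by (auto dest: in_mset_setD)
lemma ms_rep_sub: "set_mset (repeat_mset k X) \<subseteq> set_mset X" by (auto dest: in_repeatD)

definition Inv :: "nat \<Rightarrow> 'a multiset \<Rightarrow> bool" where
  "Inv k m \<longleftrightarrow> set_mset m \<subseteq> places C \<and> (\<exists>a b. b \<le> a \<and>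
     reach N (repeat_mset k (mset_set (ins N))) (fNm m + repeat_mset (a - b) {#n#}) \<and>
     reach M (repeat_mset a (mset_set (ins M))) (fMm m + repeat_mset b (mset_set (outs M))))"

lemma finpre: "finite (preset (flow N) t)" "finite (postset (flow N) t)"
  "finite (preset (flow M) t)" "finite (postset (flow M) t)"
  by (simp_all add: finite_preset finite_postset finN finM)

lemma Inv_step_M:
  assumes "Inv k m" "t \<in> trans M" "m = mset_set (preset (flow M) t) + R" "m' = R + mset_set (postset (flow M) t)"
  shows "Inv k m'"
proof -
  obtain a b where ab: "b \<le> a"
    "reach N (repeat_mset k (mset_set (ins N))) (fNm m + repeat_mset (a - b) {#n#})"
    "reach M (repeat_mset a (mset_set (ins M))) (fMm m + repeat_mset b (mset_set (outs M)))"
    using assms(1) unfolding Inv_def by blast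
  have preM: "set_mset (mset_set (preset (flow M) t)) \<subseteq> places M"
    using preset_places[OF pnM assms(2)] by (auto dest: in_mset_setD)
  have postM: "set_mset (mset_set (postset (flow M) t)) \<subseteq> places M"
    using postset_places[OF pnM assms(2)] by (auto dest: in_mset_setD)
  have e1: "fNm m' = fNm m" using assms(3,4) fNm_M[OF preM] fNm_M[OF postM] by simp
  have "step M (mset_set (preset (flow M) t) + (fMm R + repeat_mset b (mset_set (outs M))))
      ((fMm R + repeat_mset b (mset_set (outs M))) + mset_set (postset (flow M) t))"
    by (rule step_fire[OF assms(2)])
  hence "reach M (fMm m + repeat_mset b (mset_set (outs M))) (fMm m' + repeat_mset b (mset_set (outs M)))"
    using assms(3,4) fMm_M[OF preM] fMm_M[OF postM] unfolding reach_def
    by (simp add: ac_simps)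
  hence r: "reach M (repeat_mset a (mset_set (ins M))) (fMm m' + repeat_mset b (mset_set (outs M)))"
    using ab(3) reach_trans by blast
  have "set_mset m' \<subseteq> places C"
  proof -
    have "set_mset R \<subseteq> places C" using assms(1,3) unfolding Inv_def by auto
    thus ?thesis using assms(4) postM places_C by auto
  qed
  thus ?thesis unfolding Inv_def using ab(1,2) e1 r by metis
qed

end

context psub begin

lemma preC_N_ms: "t \<in> trans N \<Longrightarrow> mset_set (preset (flow C) t) =
   mset_set (preset (flow N) t - {n}) + (if n \<in> preset (flow N) t then mset_set (outs M) else {#})"
  using preC_N[of t] preset_places[OF pnN, of t] outsM dPP finpre fin_sets
  by (auto intro!: mset_set_Union)

lemma postC_N_ms: "t \<in> trans N \<Longrightarrow> mset_set (postset (flow C) t) =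
   mset_set (postset (flow N) t - {n}) + (if n \<in> postset (flow N) t then mset_set (ins M) else {#})"
  using postC_N[of t] postset_places[OF pnN, of t] insM dPP finpre fin_sets
  by (auto intro!: mset_set_Union)

lemma Inv_step_N:
  assumes "Inv k m" "t \<in> trans N" "m = mset_set (preset (flow C) t) + R" "m' = R + mset_set (postset (flow C) t)"
  shows "Inv k m'"
proof -
  obtain a b where ab: "b \<le> a"
    "reach N (repeat_mset k (mset_set (ins N))) (fNm m + repeat_mset (a - b) {#n#})"
    "reach M (repeat_mset a (mset_set (ins M))) (fMm m + repeat_mset b (mset_set (outs M)))"
    using assms(1) unfolding Inv_def by blast
  define c where "c = (n \<in> preset (flow N) t)"
  define d where "d = (n \<in> postset (flow N) t)"
  define A where "A = mset_set (preset (flow N) t - {n})"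
  define B where "B = mset_set (postset (flow N) t - {n})"
  define OMc where "OMc = (if c then mset_set (outs M) else {#})"
  define IMd where "IMd = (if d then mset_set (ins M) else {#})"
  define cn where "cn = (if c then {#n#} else {#})"
  define dn where "dn = (if d then {#n#} else {#})"
  define b' where "b' = b + (if c then 1 else 0)"
  define a' where "a' = a + (if d then 1 else 0)"
  have m: "m = A + OMc + R" using assms(3) preC_N_ms[OF assms(2)] unfolding A_def OMc_def c_def by simp
  have m': "m' = R + B + IMd" using assms(4) postC_N_ms[OF assms(2)] unfolding B_def IMd_def d_def by simp
  have An: "set_mset A \<subseteq> places N" using preset_places[OF pnN assms(2)] unfolding A_def by (auto dest: in_mset_setD)
  have Bn: "set_mset B \<subseteq> places N" using postset_places[OF pnN assms(2)] unfolding B_def by (auto dest: in_mset_setD)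
  have OMm: "set_mset OMc \<subseteq> places M" using outsM unfolding OMc_def by (auto dest: in_mset_setD)
  have IMm: "set_mset IMd \<subseteq> places M" using insM unfolding IMd_def by (auto dest: in_mset_setD)
  have fNm_m: "fNm m = A + fNm R" using m fNm_N[OF An] fNm_M[OF OMm] by simp
  have fMm_m: "fMm m = OMc + fMm R" using m fMm_N[OF An] fMm_M[OF OMm] by simp
  have fNm_m': "fNm m' = fNm R + B" using m' fNm_N[OF Bn] fNm_M[OF IMm] by simp
  have fMm_m': "fMm m' = fMm R + IMd" using m' fMm_N[OF Bn] fMm_M[OF IMm] by simp
  have rb: "repeat_mset b' (mset_set (outs M)) = OMc + repeat_mset b (mset_set (outs M))"
    unfolding b'_def OMc_def by auto
  have rM: "reach M (repeat_mset a (mset_set (ins M))) (fMm R + repeat_mset b' (mset_set (outs M)))"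
    using ab(3) unfolding fMm_m rb by (simp add: ac_simps)
  have fMR: "set_mset (fMm R) \<subseteq> places M" unfolding fMm_def by auto
  have b'a: "b' \<le> a" using bound[OF pM ssM fMR rM] .
  have rM': "reach M (repeat_mset a' (mset_set (ins M))) (fMm m' + repeat_mset b' (mset_set (outs M)))"
  proof -
    have "reach M (repeat_mset a (mset_set (ins M)) + IMd) (fMm R + repeat_mset b' (mset_set (outs M)) + IMd)"
      using reach_add1[OF rM] .
    moreover have "repeat_mset a (mset_set (ins M)) + IMd = repeat_mset a' (mset_set (ins M))"
      unfolding a'_def IMd_def by auto
    ultimately show ?thesis unfolding fMm_m' by (simp add: ac_simps)
  qed
  have preN: "mset_set (preset (flow N) t) = A + cn"
    using mset_set_split[OF finpre(1), of t n] unfolding A_def cn_def c_def by simp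
  have postN: "mset_set (postset (flow N) t) = B + dn"
    using mset_set_split[OF finpre(2), of t n] unfolding B_def dn_def d_def by simp
  have ra: "repeat_mset (a - b) {#n#} = cn + repeat_mset (a - b') {#n#}"
    using b'a unfolding cn_def b'_def by (cases c) (auto simp: Suc_diff_Suc[symmetric])
  have ra': "repeat_mset (a' - b') {#n#} = repeat_mset (a - b') {#n#} + dn"
    using b'a unfolding dn_def a'_def by (cases d) (auto simp: Suc_diff_le)
  have "step N (mset_set (preset (flow N) t) + (fNm R + repeat_mset (a - b') {#n#}))
      ((fNm R + repeat_mset (a - b') {#n#}) + mset_set (postset (flow N) t))"
    by (rule step_fire[OF assms(2)])
  hence "reach N (fNm m + repeat_mset (a - b) {#n#}) (fNm m' + repeat_mset (a' - b') {#n#})"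
    unfolding reach_def fNm_m fNm_m' preN postN ra ra' by (simp add: ac_simps)
  hence rN': "reach N (repeat_mset k (mset_set (ins N))) (fNm m' + repeat_mset (a' - b') {#n#})"
    using ab(2) reach_trans by blast
  have b'a': "b' \<le> a'" using b'a unfolding a'_def by simp
  have "set_mset m' \<subseteq> places C"
  proof -
    have "set_mset R \<subseteq> places C" using assms(1) m unfolding Inv_def by auto
    moreover have "set_mset B \<subseteq> places C" using Bn places_C unfolding B_def
      by (auto dest: in_mset_setD)
    ultimately show ?thesis using m' IMm places_C by auto
  qed
  thus ?thesis unfolding Inv_def using b'a' rN' rM' by blast
qed

lemma Inv_step:
  assumes "Inv k m" "step C m m'" shows "Inv k m'"
  using assms(2)
proof (rule step_E)
  fix t R assume t: "t \<in> trans C" "m = mset_set (preset (flow C) t) + R"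
    "m' = R + mset_set (postset (flow C) t)"
  show "Inv k m'"
  proof (cases "t \<in> trans M")
    case True
    thus ?thesis using Inv_step_M[OF assms(1) True] t preC_M postC_M by simp
  next
    case False
    hence "t \<in> trans N" using t(1) trans_C by auto
    thus ?thesis using Inv_step_N[OF assms(1)] t by blast
  qed
qed

lemma Inv_reach: "Inv k m \<Longrightarrow> reach C m m' \<Longrightarrow> Inv k m'"
proof -
  assume a: "Inv k m" and b: "reach C m m'"
  from b a show "Inv k m'" unfolding reach_def by (induction rule: rtranclp_induct) (auto intro: Inv_step)
qed

end

context psub begin

lemma nC: "n \<notin> places C" using places_C nP dPP by auto

lemma insC_P: "ins C \<subseteq> places C"
  using insN insM unfolding subst_def by auto

lemma Inv_init: "Inv k (repeat_mset k (mset_set (ins C)))"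
proof (cases "n \<in> ins N")
  case True
  have insC: "mset_set (ins C) = mset_set (ins N - {n}) + mset_set (ins M)"
    using True insN insM dPP fin_sets unfolding subst_def by (auto intro!: mset_set_Union)
  have s1: "set_mset (repeat_mset k (mset_set (ins N - {n}))) \<subseteq> places N"
    using insN by (auto dest!: in_repeatD in_mset_setD)
  have s2: "set_mset (repeat_mset k (mset_set (ins M))) \<subseteq> places M"
    using insM by (auto dest!: in_repeatD in_mset_setD)
  have eqN: "repeat_mset k (mset_set (ins N)) = repeat_mset k (mset_set (ins N - {n})) + repeat_mset k {#n#}"
  proof -
    have "mset_set (ins N) = mset_set (ins N - {n}) + {#n#}"
      using mset_set_split[OF fin_sets(1), of n] True by simp
    thus ?thesis by (metis repeat_mset_distrib2)
  qed
  have "set_mset (repeat_mset k (mset_set (ins C))) \<subseteq> places C"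
    using insC_P by (auto dest!: in_repeatD in_mset_setD)
  moreover have "fNm (repeat_mset k (mset_set (ins C))) + repeat_mset (k - 0) {#n#} = repeat_mset k (mset_set (ins N))"
    unfolding insC repeat_mset_distrib2 fNm_add fNm_N[OF s1] fNm_M[OF s2] eqN by simp
  moreover have "fMm (repeat_mset k (mset_set (ins C))) + repeat_mset 0 (mset_set (outs M)) = repeat_mset k (mset_set (ins M))"
    unfolding insC repeat_mset_distrib2 fMm_add fMm_N[OF s1] fMm_M[OF s2] by simp
  ultimately show ?thesis unfolding Inv_def
    by (intro conjI exI[of _ "k"] exI[of _ "0::nat"]) (simp_all only: reach_refl le0)
next
  case False
  have insC: "ins C = ins N" using False unfolding subst_def by simp
  have s1: "set_mset (repeat_mset k (mset_set (ins N))) \<subseteq> places N"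
    using insN by (auto dest!: in_repeatD in_mset_setD)
  have "set_mset (repeat_mset k (mset_set (ins C))) \<subseteq> places C"
    using insC_P by (auto dest!: in_repeatD in_mset_setD)
  moreover have "fNm (repeat_mset k (mset_set (ins C))) + repeat_mset (0 - 0) {#n#} = repeat_mset k (mset_set (ins N))"
    unfolding insC fNm_N[OF s1] by simp
  moreover have "fMm (repeat_mset k (mset_set (ins C))) + repeat_mset 0 (mset_set (outs M)) = repeat_mset 0 (mset_set (ins M))"
    unfolding insC fMm_N[OF s1] by simp
  ultimately show ?thesis unfolding Inv_def
    by (intro conjI exI[of _ "0::nat"] exI[of _ "0::nat"]) (simp_all only: reach_refl le0)
qed

lemma lift_M: "reach M x y \<Longrightarrow> reach C (z + x) (z + y)"
  unfolding reach_def
proof (induction rule: rtranclp_induct)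
  case base then show ?case by simp
next
  case (step y w)
  from step(2) have "step C (z + y) (z + w)"
  proof (rule step_E)
    fix t R assume t: "t \<in> trans M" "y = mset_set (preset (flow M) t) + R" "w = R + mset_set (postset (flow M) t)"
    have "step C (mset_set (preset (flow C) t) + (z + R)) ((z + R) + mset_set (postset (flow C) t))"
      using t(1) trans_C by (intro step_fire) auto
    thus ?thesis using t preC_M postC_M by (simp add: ac_simps)
  qed
  thus ?case using step(3) by (simp add: rtranclp.rtrancl_into_rtrancl)
qed

definition "Enc x = filter_mset (\<lambda>p. p \<noteq> n) x + repeat_mset (count x n) (mset_set (outs M))"

lemma Enc_add[simp]: "Enc (x + y) = Enc x + Enc y"
  unfolding Enc_def by (simp add: repeat_mset_distrib)

lemma Enc_n: "Enc (repeat_mset j {#n#}) = repeat_mset j (mset_set (outs M))"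
  unfolding Enc_def by (induction j) auto

lemma Enc_no: assumes "n \<notin># x" shows "Enc x = x"
proof -
  have "filter_mset (\<lambda>p. p \<noteq> n) x = x" using assms by (intro filter_all) auto
  moreover have "count x n = 0" using assms by (simp add: not_in_iff)
  ultimately show ?thesis unfolding Enc_def by simp
qed

lemma Enc_empty[simp]: "Enc {#} = {#}" by (simp add: Enc_def)

lemma one_M: "reach M (mset_set (ins M)) (mset_set (outs M))" using one_sound[OF pM ssM] .

lemma Enc_step: "step N x y \<Longrightarrow> reach C (Enc x) (Enc y)"
proof (erule step_E)
  fix t R assume t: "t \<in> trans N" "x = mset_set (preset (flow N) t) + R" "y = R + mset_set (postset (flow N) t)"
  define c where "c = (n \<in> preset (flow N) t)"
  define d where "d = (n \<in> postset (flow N) t)"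
  define A where "A = mset_set (preset (flow N) t - {n})"
  define B where "B = mset_set (postset (flow N) t - {n})"
  define OMc where "OMc = (if c then mset_set (outs M) else {#})"
  define IMd where "IMd = (if d then mset_set (ins M) else {#})"
  define OMd where "OMd = (if d then mset_set (outs M) else {#})"
  have preN: "mset_set (preset (flow N) t) = A + (if c then {#n#} else {#})"
    using mset_set_split[OF finpre(1), of t n] unfolding A_def c_def by simp
  have postN: "mset_set (postset (flow N) t) = B + (if d then {#n#} else {#})"
    using mset_set_split[OF finpre(2), of t n] unfolding B_def d_def by simp
  have nA: "n \<notin># A" "n \<notin># B" unfolding A_def B_def by (auto dest: in_mset_setD)
  have Ex: "Enc x = A + OMc + Enc R"
    using t(2) preN Enc_no[OF nA(1)] Enc_n[of 1] unfolding OMc_def by auto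
  have Ey: "Enc y = Enc R + B + OMd"
    using t(3) postN Enc_no[OF nA(2)] Enc_n[of 1] unfolding OMd_def by auto
  have "step C (mset_set (preset (flow C) t) + Enc R) (Enc R + mset_set (postset (flow C) t))"
    using t(1) trans_C by (intro step_fire) auto
  hence s: "reach C (Enc x) (Enc R + B + IMd)"
    unfolding Ex preC_N_ms[OF t(1)] postC_N_ms[OF t(1)] reach_def A_def B_def OMc_def IMd_def c_def d_def
    by (simp add: ac_simps)
  have "reach M IMd OMd" unfolding IMd_def OMd_def using one_M by auto
  hence "reach C (Enc R + B + IMd) (Enc R + B + OMd)" by (rule lift_M)
  thus ?thesis using s Ey reach_trans by metis
qed

lemma Enc_reach: "reach N x y \<Longrightarrow> reach C (Enc x) (Enc y)"
  unfolding reach_def[of N]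
  by (induction rule: rtranclp_induct) (auto intro: reach_trans Enc_step)

end

context psub begin

lemma psub_sound: "sub_sound_p C"
  unfolding sub_sound_p_def
proof (intro allI impI)
  fix k k' m'
  assume kk: "k' \<le> k" and m'P: "set_mset m' \<subseteq> places C"
    and r: "reach C (repeat_mset k (mset_set (ins C))) (m' + repeat_mset k' (mset_set (outs C)))"
  let ?mm = "m' + repeat_mset k' (mset_set (outs C))"
  have "Inv k ?mm" using Inv_reach[OF Inv_init r] .
  then obtain a b where ab: "b \<le> a"
    "reach N (repeat_mset k (mset_set (ins N))) (fNm ?mm + repeat_mset (a - b) {#n#})"
    "reach M (repeat_mset a (mset_set (ins M))) (fMm ?mm + repeat_mset b (mset_set (outs M)))"
    unfolding Inv_def by blast
  have fNm'P: "set_mset (fNm m') \<subseteq> places N" using m'P places_C unfolding fNm_def by auto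
  have fMm'P: "set_mset (fMm m') \<subseteq> places M" unfolding fMm_def by auto
  have m'split: "m' = fNm m' + fMm m'" by (rule fNM_split)
  have nfN: "n \<notin># fNm m'" using m'P nC unfolding fNm_def by auto
  show "reach C m' (repeat_mset (k - k') (mset_set (outs C)))"
  proof (cases "n \<in> outs N")
    case False
    have oC: "outs C = outs N" using False unfolding subst_def by simp
    have sO: "set_mset (repeat_mset k' (mset_set (outs N))) \<subseteq> places N"
      using outsN by (auto dest!: in_repeatD in_mset_setD)
    have rN: "reach N (repeat_mset k (mset_set (ins N))) ((fNm m' + repeat_mset (a - b) {#n#}) + repeat_mset k' (mset_set (outs N)))"
      using ab(2) unfolding oC fNm_add fNm_N[OF sO] by (simp add: ac_simps)
    have "set_mset (fNm m' + repeat_mset (a - b) {#n#}) \<subseteq> places N" using fNm'P nP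
      by (auto dest!: in_repeatD)
    from sound_use[OF ssN kk this rN]
    have sN: "reach N (fNm m' + repeat_mset (a - b) {#n#}) (repeat_mset (k - k') (mset_set (outs N)))" .
    have "reach M (repeat_mset a (mset_set (ins M))) (fMm m' + repeat_mset b (mset_set (outs M)))"
      using ab(3) unfolding oC fMm_add fMm_N[OF sO] by simp
    from sound_use[OF ssM ab(1) fMm'P this]
    have sM: "reach M (fMm m') (repeat_mset (a - b) (mset_set (outs M)))" .
    have c1: "reach C m' (fNm m' + repeat_mset (a - b) (mset_set (outs M)))"
      using lift_M[OF sM, of "fNm m'"] m'split by simp
    have c2: "reach C (Enc (fNm m' + repeat_mset (a - b) {#n#})) (Enc (repeat_mset (k - k') (mset_set (outs N))))"
      by (rule Enc_reach[OF sN])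
    have "n \<notin># repeat_mset (k - k') (mset_set (outs N))" using False by (auto dest!: in_repeatD in_mset_setD)
    hence "Enc (repeat_mset (k - k') (mset_set (outs N))) = repeat_mset (k - k') (mset_set (outs C))"
      using Enc_no oC by simp
    moreover have "Enc (fNm m' + repeat_mset (a - b) {#n#}) = fNm m' + repeat_mset (a - b) (mset_set (outs M))"
      using Enc_no[OF nfN] Enc_n by simp
    ultimately show ?thesis using c1 c2 reach_trans by metis
  next
    case True
    have oC: "mset_set (outs C) = mset_set (outs N - {n}) + mset_set (outs M)"
      using True outsN outsM dPP fin_sets unfolding subst_def by (auto intro!: mset_set_Union)
    have sO: "set_mset (repeat_mset k' (mset_set (outs N - {n}))) \<subseteq> places N"
      using outsN by (auto dest!: in_repeatD in_mset_setD)
    have sOM: "set_mset (repeat_mset k' (mset_set (outs M))) \<subseteq> places M"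
      using outsM by (auto dest!: in_repeatD in_mset_setD)
    have rM: "reach M (repeat_mset a (mset_set (ins M))) (fMm m' + repeat_mset (k' + b) (mset_set (outs M)))"
      using ab(3) unfolding oC repeat_mset_distrib2 fMm_add fMm_N[OF sO] fMm_M[OF sOM]
      by (simp add: repeat_mset_distrib ac_simps)
    have kb: "k' + b \<le> a" using bound[OF pM ssM fMm'P rM] .
    from sound_use[OF ssM kb fMm'P rM]
    have sM: "reach M (fMm m') (repeat_mset (a - (k' + b)) (mset_set (outs M)))" .
    have eqON: "mset_set (outs N) = mset_set (outs N - {n}) + {#n#}"
      using mset_set_split[OF fin_sets(2), of n] True by simp
    have eqab: "repeat_mset (a - b) {#n#} = repeat_mset (a - (k' + b)) {#n#} + repeat_mset k' {#n#}"
    proof -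
      have "a - b = (a - (k' + b)) + k'" using kb by simp
      thus ?thesis by (metis repeat_mset_distrib)
    qed
    have rN: "reach N (repeat_mset k (mset_set (ins N))) ((fNm m' + repeat_mset (a - (k' + b)) {#n#}) + repeat_mset k' (mset_set (outs N)))"
      using ab(2) unfolding oC repeat_mset_distrib2 fNm_add fNm_N[OF sO] fNm_M[OF sOM] eqab eqON
      by (simp add: ac_simps)
    have "set_mset (fNm m' + repeat_mset (a - (k' + b)) {#n#}) \<subseteq> places N" using fNm'P nP
      by (auto dest!: in_repeatD)
    from sound_use[OF ssN kk this rN]
    have sN: "reach N (fNm m' + repeat_mset (a - (k' + b)) {#n#}) (repeat_mset (k - k') (mset_set (outs N)))" .
    have c1: "reach C m' (fNm m' + repeat_mset (a - (k' + b)) (mset_set (outs M)))"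
      using lift_M[OF sM, of "fNm m'"] m'split by simp
    have c2: "reach C (Enc (fNm m' + repeat_mset (a - (k' + b)) {#n#})) (Enc (repeat_mset (k - k') (mset_set (outs N))))"
      by (rule Enc_reach[OF sN])
    have "n \<notin># repeat_mset (k - k') (mset_set (outs N - {n}))" by (auto dest!: in_repeatD in_mset_setD)
    hence "Enc (repeat_mset (k - k') (mset_set (outs N))) = repeat_mset (k - k') (mset_set (outs C))"
      unfolding eqON oC repeat_mset_distrib2 Enc_add using Enc_no Enc_n by simp
    moreover have "Enc (fNm m' + repeat_mset (a - (k' + b)) {#n#}) = fNm m' + repeat_mset (a - (k' + b)) (mset_set (outs M))"
      using Enc_no[OF nfN] Enc_n by simp
    ultimately show ?thesis using c1 c2 reach_trans by metis
  qed
qed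

end


lemma rtrancl_map: "(x,y) \<in> F\<^sup>* \<Longrightarrow> (f x, f y) \<in> (map_prod f f ` F)\<^sup>*"
proof (induction rule: rtrancl_induct)
  case base then show ?case by simp
next
  case (step y z)
  hence "(f y, f z) \<in> map_prod f f ` F" by force
  thus ?case using step(3) by (meson rtrancl.rtrancl_into_rtrancl)
qed

lemma tWF_petri: "tWF N \<Longrightarrow> petri_net (places N) (trans N) (flow N)"
  unfolding tWF_def wf_conn_def by blast

lemma pc_simps: "places (pc M) = Inl ` places M \<union> {Inr False, Inr True}"
  "trans (pc M) = Inl ` trans M" "ins (pc M) = {Inr False}" "outs (pc M) = {Inr True}"
  unfolding pc_def by auto

lemma pc_pre: "preset (flow (pc M)) (Inl t) = Inl ` preset (flow M) t \<union> (if t \<in> ins M then {Inr False} else {})"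
  unfolding pc_def preset_def by auto
lemma pc_post: "postset (flow (pc M)) (Inl t) = Inl ` postset (flow M) t \<union> (if t \<in> outs M then {Inr True} else {})"
  unfolding pc_def postset_def by auto

lemma pc_pWF:
  assumes "tWF M" shows "pWF (pc M)"
proof -
  have pn: "petri_net (places M) (trans M) (flow M)" using assms tWF_petri by blast
  have iM: "ins M \<subseteq> trans M" "ins M \<noteq> {}" "outs M \<subseteq> trans M" "outs M \<noteq> {}"
    using assms unfolding tWF_def wf_conn_def by auto
  have cin: "\<forall>x\<in>nodes M. \<exists>i\<in>ins M. (i, x) \<in> (flow M)\<^sup>*"
   and cout: "\<forall>x\<in>nodes M. \<exists>q\<in>outs M. (x, q) \<in> (flow M)\<^sup>*"
    using assms unfolding tWF_def wf_conn_def by auto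
  have sub: "map_prod Inl Inl ` flow M \<subseteq> flow (pc M)" unfolding pc_def by auto
  have lift: "(x,y) \<in> (flow M)\<^sup>* \<Longrightarrow> (Inl x, Inl y) \<in> (flow (pc M))\<^sup>*" for x y
    using rtrancl_map[of x y "flow M" Inl] rtrancl_mono[OF sub] by blast
  have e1: "t \<in> ins M \<Longrightarrow> (Inr False, Inl t) \<in> flow (pc M)" for t unfolding pc_def by auto
  have e2: "t \<in> outs M \<Longrightarrow> (Inl t, Inr True) \<in> flow (pc M)" for t unfolding pc_def by auto
  have pnP: "petri_net (places (pc M)) (trans (pc M)) (flow (pc M))"
    using pn iM unfolding petri_net_def pc_def by auto
  have nodesP: "nodes (pc M) = Inl ` nodes M \<union> {Inr False, Inr True}"
    unfolding nodes_def pc_simps by auto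
  have toN: "\<exists>i\<in>ins M. (Inr False, Inl x) \<in> (flow (pc M))\<^sup>*" if "x \<in> nodes M" for x
    using cin that e1 lift by (meson converse_rtrancl_into_rtrancl)
  have frN: "(Inl x, Inr True) \<in> (flow (pc M))\<^sup>*" if "x \<in> nodes M" for x
    using cout that e2 lift by (meson rtrancl.rtrancl_into_rtrancl)
  obtain i where i: "i \<in> ins M" using iM by blast
  have inodes: "i \<in> nodes M" using i iM unfolding nodes_def by blast
  have c1: "\<forall>x\<in>nodes (pc M). \<exists>i\<in>ins (pc M). (i, x) \<in> (flow (pc M))\<^sup>*"
  proof
    fix x assume "x \<in> nodes (pc M)"
    then consider y where "y \<in> nodes M" "x = Inl y" | "x = Inr False" | "x = Inr True" unfolding nodesP by blast
    thus "\<exists>i\<in>ins (pc M). (i, x) \<in> (flow (pc M))\<^sup>*"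
    proof cases
      case 1 thus ?thesis using toN[OF 1(1)] unfolding 1(2) pc_simps by blast
    next
      case 2 thus ?thesis unfolding pc_simps by blast
    next
      case 3 thus ?thesis using toN[OF inodes] frN[OF inodes] unfolding pc_simps by (blast intro: rtrancl_trans)
    qed
  qed
  have c2: "\<forall>x\<in>nodes (pc M). \<exists>q\<in>outs (pc M). (x, q) \<in> (flow (pc M))\<^sup>*"
  proof
    fix x assume "x \<in> nodes (pc M)"
    then consider y where "y \<in> nodes M" "x = Inl y" | "x = Inr False" | "x = Inr True" unfolding nodesP by blast
    thus "\<exists>q\<in>outs (pc M). (x, q) \<in> (flow (pc M))\<^sup>*"
    proof cases
      case 1 thus ?thesis using frN[OF 1(1)] unfolding 1(2) pc_simps by blast
    next
      case 2 thus ?thesis using toN[OF inodes] frN[OF inodes] unfolding pc_simps by (blast intro: rtrancl_trans)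
    next
      case 3 thus ?thesis unfolding pc_simps by blast
    qed
  qed
  show ?thesis unfolding pWF_def wf_conn_def using pnP c1 c2 by (simp add: pc_simps)
qed



locale tsub =
  fixes N M :: "'a wfnet" and n :: 'a
  assumes pnN: "petri_net (places N) (trans N) (flow N)"
    and insN: "ins N \<subseteq> places N" and outsN: "outs N \<subseteq> places N"
    and nT: "n \<in> trans N"
    and ssN: "sub_sound_p N"
    and tM: "tWF M" and ssM: "sub_sound_p (pc M)"
    and disj: "nodes N \<inter> nodes M = {}"
begin

abbreviation "C \<equiv> subst N n M"
abbreviation "P \<equiv> pc M"

lemma pP: "pWF P" using pc_pWF[OF tM] .
lemma pnM: "petri_net (places M) (trans M) (flow M)" using tM tWF_petri by blast
lemma insM: "ins M \<subseteq> trans M" and outsM: "outs M \<subseteq> trans M" using tM unfolding tWF_def by auto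

lemma finN: "finite (places N)" "finite (trans N)" "finite (flow N)"
  using pnN petri_finite_flow unfolding petri_net_def by auto
lemma finM: "finite (places M)" "finite (trans M)" "finite (flow M)"
  using pnM petri_finite_flow unfolding petri_net_def by auto
lemma fin_sets: "finite (ins N)" "finite (outs N)" "finite (ins M)" "finite (outs M)"
  using finN finM insN outsN insM outsM finite_subset by blast+

lemma nP: "n \<notin> places N" using nT pnN unfolding petri_net_def by blast
lemma PTN: "places N \<inter> trans N = {}" using pnN unfolding petri_net_def by blast
lemma PTM: "places M \<inter> trans M = {}" using pnM unfolding petri_net_def by blast
lemma dPP: "places N \<inter> places M = {}" and dPT: "places N \<inter> trans M = {}"
  and dTP: "trans N \<inter> places M = {}" and dTT: "trans N \<inter> trans M = {}"
  using disj unfolding nodes_def by blast+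

lemma trans_C: "trans C = (trans N - {n}) \<union> trans M" unfolding subst_def by auto
lemma places_C: "places C = places N \<union> places M" using nP unfolding subst_def by auto

lemma fN: "(x,y) \<in> flow N \<Longrightarrow> (x \<in> places N \<and> y \<in> trans N) \<or> (x \<in> trans N \<and> y \<in> places N)"
  using flow_cases[OF pnN] by blast
lemma fM: "(x,y) \<in> flow M \<Longrightarrow> (x \<in> places M \<and> y \<in> trans M) \<or> (x \<in> trans M \<and> y \<in> places M)"
  using flow_cases[OF pnM] by blast

lemma preC_N: assumes t: "t \<in> trans N" "t \<noteq> n" shows "preset (flow C) t = preset (flow N) t"
proof -
  have a: "(x,t) \<notin> flow M" for x using fM[of x t] t dTP dTT by blast
  have b: "t \<notin> ins M" using insM t dTT by blast
  have c: "(n,t) \<notin> flow N" using fN[of n t] t nP PTN by blast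
  have d: "(x,t) \<in> flow N \<Longrightarrow> x \<noteq> n" for x using fN[of x t] t nP PTN by blast
  show ?thesis using a b c d t unfolding subst_def preset_def postset_def by auto
qed
lemma postC_N: assumes t: "t \<in> trans N" "t \<noteq> n" shows "postset (flow C) t = postset (flow N) t"
proof -
  have a: "(t,x) \<notin> flow M" for x using fM[of t x] t dTP dTT by blast
  have b: "t \<notin> outs M" using outsM t dTT by blast
  have c: "(t,n) \<notin> flow N" using fN[of t n] t nP PTN by blast
  have d: "(t,x) \<in> flow N \<Longrightarrow> x \<noteq> n" for x using fN[of t x] t nP PTN by blast
  show ?thesis using a b c d t unfolding subst_def preset_def postset_def by auto
qed
lemma preC_M: assumes t: "t \<in> trans M" shows "preset (flow C) t =
   preset (flow M) t \<union> (if t \<in> ins M then preset (flow N) n else {})"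
proof -
  have a: "(x,t) \<notin> flow N" for x using fN[of x t] t dPT dTT by blast
  show ?thesis using a t unfolding subst_def preset_def postset_def by auto
qed
lemma postC_M: assumes t: "t \<in> trans M" shows "postset (flow C) t =
   postset (flow M) t \<union> (if t \<in> outs M then postset (flow N) n else {})"
proof -
  have a: "(t,x) \<notin> flow N" for x using fN[of t x] t dPT dTT by blast
  show ?thesis using a t unfolding subst_def preset_def postset_def by auto
qed

end

context tsub begin

abbreviation "PreN \<equiv> mset_set (preset (flow N) n)"
abbreviation "PostN \<equiv> mset_set (postset (flow N) n)"
abbreviation "L \<equiv> image_mset Inl"

definition "fNm m = filter_mset (\<lambda>p. p \<notin> places M) m"
definition "fMm m = filter_mset (\<lambda>p. p \<in> places M) m"

lemma fNm_add[simp]: "fNm (a + b) = fNm a + fNm b" unfolding fNm_def by simp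
lemma fMm_add[simp]: "fMm (a + b) = fMm a + fMm b" unfolding fMm_def by simp
lemma fNm_M: "set_mset a \<subseteq> places M \<Longrightarrow> fNm a = {#}" unfolding fNm_def by (rule filter_none) auto
lemma fMm_M: "set_mset a \<subseteq> places M \<Longrightarrow> fMm a = a" unfolding fMm_def by (rule filter_all) auto
lemma fNm_N: "set_mset a \<subseteq> places N \<Longrightarrow> fNm a = a" unfolding fNm_def using dPP by (intro filter_all) auto
lemma fMm_N: "set_mset a \<subseteq> places N \<Longrightarrow> fMm a = {#}" unfolding fMm_def using dPP by (intro filter_none) auto
lemma fNM_split: "m = fNm m + fMm m" unfolding fNm_def fMm_def
  by (metis add.commute multiset_partition)

lemma ms_sub: "set_mset (mset_set S) \<subseteq> S" by (auto dest: in_mset_setD)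

lemma finpre: "finite (preset (flow N) t)" "finite (postset (flow N) t)"
  "finite (preset (flow M) t)" "finite (postset (flow M) t)"
  by (simp_all add: finite_preset finite_postset finN finM)

lemma preN_P: "set_mset PreN \<subseteq> places N" using preset_places[OF pnN nT] by (auto dest: in_mset_setD)
lemma postN_P: "set_mset PostN \<subseteq> places N" using postset_places[OF pnN nT] by (auto dest: in_mset_setD)

lemma preC_M_ms: "t \<in> trans M \<Longrightarrow> mset_set (preset (flow C) t) =
   mset_set (preset (flow M) t) + (if t \<in> ins M then PreN else {#})"
  using preC_M[of t] preset_places[OF pnM, of t] preset_places[OF pnN nT] dPP finpre
  by (auto intro!: mset_set_Union)
lemma postC_M_ms: "t \<in> trans M \<Longrightarrow> mset_set (postset (flow C) t) =
   mset_set (postset (flow M) t) + (if t \<in> outs M then PostN else {#})"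
  using postC_M[of t] postset_places[OF pnM, of t] postset_places[OF pnN nT] dPP finpre
  by (auto intro!: mset_set_Union)

lemma pc_pre_ms: "mset_set (preset (flow P) (Inl t)) =
   L (mset_set (preset (flow M) t)) + (if t \<in> ins M then {#Inr False#} else {#})"
proof -
  have e: "mset_set (Inl ` preset (flow M) t) = L (mset_set (preset (flow M) t))"
    by (simp add: image_mset_mset_set)
  have f: "finite (Inl ` preset (flow M) t)" using finpre[of t] by blast
  have i: "mset_set (insert (Inr False) (Inl ` preset (flow M) t)) = add_mset (Inr False) (mset_set (Inl ` preset (flow M) t))"
    by (rule mset_set.insert[OF f]) auto
  show ?thesis unfolding pc_pre using e i by simp
qed
lemma pc_post_ms: "mset_set (postset (flow P) (Inl t)) =
   L (mset_set (postset (flow M) t)) + (if t \<in> outs M then {#Inr True#} else {#})"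
proof -
  have e: "mset_set (Inl ` postset (flow M) t) = L (mset_set (postset (flow M) t))"
    by (simp add: image_mset_mset_set)
  have f: "finite (Inl ` postset (flow M) t)" using finpre[of t] by blast
  have i: "mset_set (insert (Inr True) (Inl ` postset (flow M) t)) = add_mset (Inr True) (mset_set (Inl ` postset (flow M) t))"
    by (rule mset_set.insert[OF f]) auto
  show ?thesis unfolding pc_post using e i by simp
qed

definition Inv :: "nat \<Rightarrow> 'a multiset \<Rightarrow> bool" where
  "Inv k m \<longleftrightarrow> set_mset m \<subseteq> places C \<and> (\<exists>a b. b \<le> a \<and>
     reach N (repeat_mset k (mset_set (ins N))) (fNm m + repeat_mset (a - b) PostN) \<and>
     reach P (repeat_mset a {#Inr False#}) (L (fMm m) + repeat_mset b {#Inr True#}))"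

lemma Inv_step_N:
  assumes "Inv k m" "t \<in> trans N" "t \<noteq> n" "m = mset_set (preset (flow N) t) + R" "m' = R + mset_set (postset (flow N) t)"
  shows "Inv k m'"
proof -
  obtain a b where ab: "b \<le> a"
    "reach N (repeat_mset k (mset_set (ins N))) (fNm m + repeat_mset (a - b) PostN)"
    "reach P (repeat_mset a {#Inr False#}) (L (fMm m) + repeat_mset b {#Inr True#})"
    using assms(1) unfolding Inv_def by blast
  have preM: "set_mset (mset_set (preset (flow N) t)) \<subseteq> places N"
    using preset_places[OF pnN assms(2)] by (auto dest: in_mset_setD)
  have postM: "set_mset (mset_set (postset (flow N) t)) \<subseteq> places N"
    using postset_places[OF pnN assms(2)] by (auto dest: in_mset_setD)
  have e1: "fMm m' = fMm m" using assms(4,5) fMm_N[OF preM] fMm_N[OF postM] by simp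
  have "step N (mset_set (preset (flow N) t) + (fNm R + repeat_mset (a - b) PostN))
      ((fNm R + repeat_mset (a - b) PostN) + mset_set (postset (flow N) t))"
    by (rule step_fire[OF assms(2)])
  hence "reach N (fNm m + repeat_mset (a - b) PostN) (fNm m' + repeat_mset (a - b) PostN)"
    using assms(4,5) fNm_N[OF preM] fNm_N[OF postM] unfolding reach_def
    by (simp add: ac_simps)
  hence r: "reach N (repeat_mset k (mset_set (ins N))) (fNm m' + repeat_mset (a - b) PostN)"
    using ab(2) reach_trans by blast
  have "set_mset m' \<subseteq> places C"
  proof -
    have "set_mset R \<subseteq> places C" using assms(1,4) unfolding Inv_def by auto
    thus ?thesis using assms(5) postM places_C by auto
  qed
  thus ?thesis unfolding Inv_def using ab(1,3) e1 r by metis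
qed

lemma Inv_step_M:
  assumes "Inv k m" "t \<in> trans M" "m = mset_set (preset (flow C) t) + R" "m' = R + mset_set (postset (flow C) t)"
  shows "Inv k m'"
proof -
  obtain a b where ab: "b \<le> a"
    "reach N (repeat_mset k (mset_set (ins N))) (fNm m + repeat_mset (a - b) PostN)"
    "reach P (repeat_mset a {#Inr False#}) (L (fMm m) + repeat_mset b {#Inr True#})"
    using assms(1) unfolding Inv_def by blast
  define c where "c = (t \<in> ins M)"
  define d where "d = (t \<in> outs M)"
  define A where "A = mset_set (preset (flow M) t)"
  define B where "B = mset_set (postset (flow M) t)"
  define PreNc where "PreNc = (if c then PreN else {#})"
  define PostNd where "PostNd = (if d then PostN else {#})"
  define pic where "pic = (if c then {#Inr False#} else ({#} :: ('a + bool) multiset))"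
  define pod where "pod = (if d then {#Inr True#} else ({#} :: ('a + bool) multiset))"
  define a' where "a' = a + (if c then 1 else 0)"
  define b' where "b' = b + (if d then 1 else 0)"
  have m: "m = A + PreNc + R" using assms(3) preC_M_ms[OF assms(2)] unfolding A_def PreNc_def c_def by simp
  have m': "m' = R + B + PostNd" using assms(4) postC_M_ms[OF assms(2)] unfolding B_def PostNd_def d_def by simp
  have Am: "set_mset A \<subseteq> places M" using preset_places[OF pnM assms(2)] unfolding A_def by (auto dest: in_mset_setD)
  have Bm: "set_mset B \<subseteq> places M" using postset_places[OF pnM assms(2)] unfolding B_def by (auto dest: in_mset_setD)
  have Pn: "set_mset PreNc \<subseteq> places N" using preN_P unfolding PreNc_def by auto
  have Qn: "set_mset PostNd \<subseteq> places N" using postN_P unfolding PostNd_def by auto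
  have fNm_m: "fNm m = PreNc + fNm R" using m fNm_M[OF Am] fNm_N[OF Pn] by simp
  have fMm_m: "fMm m = A + fMm R" using m fMm_M[OF Am] fMm_N[OF Pn] by simp
  have fNm_m': "fNm m' = fNm R + PostNd" using m' fNm_M[OF Bm] fNm_N[OF Qn] by simp
  have fMm_m': "fMm m' = fMm R + B" using m' fMm_M[OF Bm] fMm_N[OF Qn] by simp
  have r1: "reach P (repeat_mset a' {#Inr False#}) (L A + pic + (L (fMm R) + repeat_mset b {#Inr True#}))"
  proof -
    have "reach P (repeat_mset a {#Inr False#} + pic) (L (fMm m) + repeat_mset b {#Inr True#} + pic)"
      using reach_add1[OF ab(3)] .
    moreover have "repeat_mset a {#Inr False#} + pic = repeat_mset a' {#Inr False#}"
      unfolding a'_def pic_def by auto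
    ultimately show ?thesis unfolding fMm_m by (simp add: ac_simps)
  qed
  define Z where "Z = L (fMm R) + repeat_mset b {#Inr True#}"
  have st: "step P (mset_set (preset (flow P) (Inl t)) + Z) (Z + mset_set (postset (flow P) (Inl t)))"
    using assms(2) by (intro step_fire) (simp add: pc_simps)
  have eq1: "mset_set (preset (flow P) (Inl t)) + Z = L A + pic + Z"
    unfolding pc_pre_ms A_def pic_def c_def by simp
  have eq2: "Z + mset_set (postset (flow P) (Inl t)) = L (fMm m') + repeat_mset b' {#Inr True#}"
    unfolding pc_post_ms fMm_m' B_def b'_def d_def Z_def
    by (cases "t \<in> outs M") (simp_all add: ac_simps)
  have "reach P (L A + pic + (L (fMm R) + repeat_mset b {#Inr True#})) (L (fMm m') + repeat_mset b' {#Inr True#})"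
    unfolding reach_def using st eq1 eq2 Z_def by (metis r_into_rtranclp)
  hence rP: "reach P (repeat_mset a' {#Inr False#}) (L (fMm m') + repeat_mset b' {#Inr True#})"
    using r1 reach_trans by blast
  have sP: "set_mset (L (fMm m')) \<subseteq> places P" unfolding fMm_def pc_simps by auto
  have b'a': "b' \<le> a'" using bound[OF pP ssM sP] rP by (simp add: pc_simps)
  have rN1: "reach N (fNm m + repeat_mset (a - b) PostN) (fNm R + repeat_mset (a' - b) PostN)"
  proof (cases c)
    case True
    have "step N (PreN + (fNm R + repeat_mset (a - b) PostN)) ((fNm R + repeat_mset (a - b) PostN) + PostN)"
      by (rule step_fire[OF nT])
    moreover have "repeat_mset (a' - b) PostN = repeat_mset (a - b) PostN + PostN"
      using ab(1) True unfolding a'_def by (simp add: Suc_diff_le)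
    ultimately show ?thesis using True unfolding fNm_m PreNc_def reach_def by (simp add: ac_simps)
  next
    case False thus ?thesis unfolding fNm_m PreNc_def a'_def by simp
  qed
  have "repeat_mset (a' - b) PostN = PostNd + repeat_mset (a' - b') PostN"
    using b'a' unfolding PostNd_def b'_def by (cases d) (auto simp: Suc_diff_Suc[symmetric])
  hence "reach N (fNm m + repeat_mset (a - b) PostN) (fNm m' + repeat_mset (a' - b') PostN)"
    using rN1 unfolding fNm_m' by (simp add: ac_simps)
  hence rN: "reach N (repeat_mset k (mset_set (ins N))) (fNm m' + repeat_mset (a' - b') PostN)"
    using ab(2) reach_trans by blast
  have "set_mset m' \<subseteq> places C"
  proof -
    have "set_mset R \<subseteq> places C" using assms(1) m unfolding Inv_def by auto
    thus ?thesis using m' Bm Qn places_C by auto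
  qed
  thus ?thesis unfolding Inv_def using b'a' rN rP by blast
qed

lemma Inv_step:
  assumes "Inv k m" "step C m m'" shows "Inv k m'"
  using assms(2)
proof (rule step_E)
  fix t R assume t: "t \<in> trans C" "m = mset_set (preset (flow C) t) + R"
    "m' = R + mset_set (postset (flow C) t)"
  show "Inv k m'"
  proof (cases "t \<in> trans M")
    case True
    thus ?thesis using Inv_step_M[OF assms(1) True] t by blast
  next
    case False
    hence "t \<in> trans N" "t \<noteq> n" using t(1) trans_C by auto
    thus ?thesis using Inv_step_N[OF assms(1)] t preC_N postC_N by simp
  qed
qed

lemma Inv_reach: "Inv k m \<Longrightarrow> reach C m m' \<Longrightarrow> Inv k m'"
proof -
  assume a: "Inv k m" and b: "reach C m m'"
  from b a show "Inv k m'" unfolding reach_def by (induction rule: rtranclp_induct) (auto intro: Inv_step)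
qed

end

context tsub begin

definition "Dec y = image_mset projl (filter_mset isl y) + repeat_mset (count y (Inr False)) PreN
   + repeat_mset (count y (Inr True)) PostN"

lemma Dec_add[simp]: "Dec (x + y) = Dec x + Dec y"
  unfolding Dec_def by (simp add: repeat_mset_distrib ac_simps)
lemma projl_L[simp]: "image_mset projl (L x) = x" by (induction x) auto

lemma Dec_L[simp]: "Dec (L x) = x"
proof -
  have 1: "filter_mset isl (L x) = L x" by (rule filter_all) auto
  have 2: "count (L x) (Inr b) = 0" for b
  proof -
    have "Inr b \<notin># L x" by auto
    thus ?thesis by (simp add: count_eq_zero_iff)
  qed
  show ?thesis unfolding Dec_def 1 2 by simp
qed
lemma Dec_add_mset: "Dec (add_mset x X) = Dec {#x#} + Dec X"
  by (metis Dec_add add_mset_add_single add.commute)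
lemma Dec_empty[simp]: "Dec {#} = {#}" unfolding Dec_def by simp
lemma Dec_pi[simp]: "Dec {#Inr False#} = PreN" unfolding Dec_def by simp
lemma Dec_po[simp]: "Dec {#Inr True#} = PostN" unfolding Dec_def by simp
lemma Dec_add_pi[simp]: "Dec (add_mset (Inr False) X) = PreN + Dec X"
  using Dec_add_mset[of "Inr False" X] by (simp only: Dec_pi)
lemma Dec_add_po[simp]: "Dec (add_mset (Inr True) X) = PostN + Dec X"
  using Dec_add_mset[of "Inr True" X] by (simp only: Dec_po)
lemma Dec_rep_po: "Dec (repeat_mset j {#Inr True#}) = repeat_mset j PostN"
  by (induction j) (auto simp: Dec_def)

lemma Dec_step: "step P y y' \<Longrightarrow> step C (Dec y) (Dec y')"
proof (erule step_E)
  fix t R assume t: "t \<in> trans P" "y = mset_set (preset (flow P) t) + R" "y' = R + mset_set (postset (flow P) t)"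
  obtain t0 where t0: "t = Inl t0" "t0 \<in> trans M" using t(1) unfolding pc_simps by blast
  have "step C (mset_set (preset (flow C) t0) + Dec R) (Dec R + mset_set (postset (flow C) t0))"
    using t0 trans_C by (intro step_fire) auto
  moreover have "Dec y = mset_set (preset (flow C) t0) + Dec R"
    unfolding t t0 pc_pre_ms preC_M_ms[OF t0(2)] by (cases "t0 \<in> ins M") simp_all
  moreover have "Dec y' = Dec R + mset_set (postset (flow C) t0)"
    unfolding t t0 pc_post_ms postC_M_ms[OF t0(2)] by (cases "t0 \<in> outs M") simp_all
  ultimately show ?thesis by simp
qed

lemma Dec_reach: "reach P y y' \<Longrightarrow> reach C (Dec y) (Dec y')"
  unfolding reach_def
  by (induction rule: rtranclp_induct) (auto intro: rtranclp.rtrancl_into_rtrancl Dec_step)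

lemma one_P: "reach P {#Inr False#} {#Inr True#}"
  using one_sound[OF pP ssM] by (simp add: pc_simps)

lemma lift_N_step: "step N x y \<Longrightarrow> reach C x y"
proof (erule step_E)
  fix t R assume t: "t \<in> trans N" "x = mset_set (preset (flow N) t) + R" "y = R + mset_set (postset (flow N) t)"
  show "reach C x y"
  proof (cases "t = n")
    case True
    have "reach C PreN PostN" using Dec_reach[OF one_P] by simp
    from reach_add1[OF this, of R] show ?thesis using t True by (simp add: add.commute)
  next
    case False
    have "step C (mset_set (preset (flow C) t) + R) (R + mset_set (postset (flow C) t))"
      using t False trans_C by (intro step_fire) auto
    thus ?thesis using t False preC_N postC_N unfolding reach_def by auto
  qed
qed

lemma lift_N: "reach N x y \<Longrightarrow> reach C x y"
  unfolding reach_def[of N]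
  by (induction rule: rtranclp_induct) (auto intro: reach_trans lift_N_step)

lemma insC: "ins C = ins N" using nP insN unfolding subst_def by auto
lemma outsC: "outs C = outs N" using nP outsN unfolding subst_def by auto

lemma Inv_init: "Inv k (repeat_mset k (mset_set (ins C)))"
proof -
  have s1: "set_mset (repeat_mset k (mset_set (ins N))) \<subseteq> places N"
    using insN by (auto dest!: in_repeatD in_mset_setD)
  have "set_mset (repeat_mset k (mset_set (ins C))) \<subseteq> places C"
    using s1 insC places_C by auto
  moreover have "fNm (repeat_mset k (mset_set (ins C))) + repeat_mset (0 - 0) PostN = repeat_mset k (mset_set (ins N))"
    unfolding insC fNm_N[OF s1] by simp
  moreover have "L (fMm (repeat_mset k (mset_set (ins C)))) + repeat_mset 0 {#Inr True#} = repeat_mset 0 {#Inr False#}"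
    unfolding insC fMm_N[OF s1] by simp
  ultimately show ?thesis unfolding Inv_def
    by (intro conjI exI[of _ "0::nat"] exI[of _ "0::nat"]) (simp_all only: reach_refl le0)
qed

lemma tsub_sound: "sub_sound_p C"
  unfolding sub_sound_p_def
proof (intro allI impI)
  fix k k' m'
  assume kk: "k' \<le> k" and m'P: "set_mset m' \<subseteq> places C"
    and r: "reach C (repeat_mset k (mset_set (ins C))) (m' + repeat_mset k' (mset_set (outs C)))"
  let ?mm = "m' + repeat_mset k' (mset_set (outs C))"
  have "Inv k ?mm" using Inv_reach[OF Inv_init r] .
  then obtain a b where ab: "b \<le> a"
    "reach N (repeat_mset k (mset_set (ins N))) (fNm ?mm + repeat_mset (a - b) PostN)"
    "reach P (repeat_mset a {#Inr False#}) (L (fMm ?mm) + repeat_mset b {#Inr True#})"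
    unfolding Inv_def by blast
  have fNm'P: "set_mset (fNm m') \<subseteq> places N" using m'P places_C unfolding fNm_def by auto
  have m'split: "m' = fNm m' + fMm m'" by (rule fNM_split)
  have sO: "set_mset (repeat_mset k' (mset_set (outs N))) \<subseteq> places N"
    using outsN by (auto dest!: in_repeatD in_mset_setD)
  have rN: "reach N (repeat_mset k (mset_set (ins N))) ((fNm m' + repeat_mset (a - b) PostN) + repeat_mset k' (mset_set (outs N)))"
    using ab(2) unfolding outsC fNm_add fNm_N[OF sO] by (simp add: ac_simps)
  have "set_mset (fNm m' + repeat_mset (a - b) PostN) \<subseteq> places N" using fNm'P postN_P
    by (auto dest!: in_repeatD)
  from sound_use[OF ssN kk this rN]
  have sN: "reach N (fNm m' + repeat_mset (a - b) PostN) (repeat_mset (k - k') (mset_set (outs N)))" .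
  have rP: "reach P (repeat_mset a (mset_set (ins P))) (L (fMm m') + repeat_mset b (mset_set (outs P)))"
    using ab(3) unfolding outsC fMm_add fMm_N[OF sO] by (simp add: pc_simps)
  have sP: "set_mset (L (fMm m')) \<subseteq> places P" unfolding fMm_def pc_simps by auto
  from sound_use[OF ssM ab(1) sP rP]
  have "reach P (L (fMm m')) (repeat_mset (a - b) {#Inr True#})" by (simp add: pc_simps)
  from Dec_reach[OF this] have "reach C (Dec (L (fMm m'))) (Dec (repeat_mset (a - b) {#Inr True#}))" .
  hence "reach C (fMm m') (repeat_mset (a - b) PostN)" by (simp only: Dec_L Dec_rep_po)
  hence c1: "reach C m' (fNm m' + repeat_mset (a - b) PostN)"
    using reach_add1 m'split by (metis add.commute)
  show "reach C m' (repeat_mset (k - k') (mset_set (outs C)))"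
    using c1 lift_N[OF sN] reach_trans outsC by metis
qed

end


definition rename :: "('a \<Rightarrow> 'b) \<Rightarrow> 'a wfnet \<Rightarrow> 'b wfnet" where
  "rename f N = \<lparr> places = f ` places N, trans = f ` trans N, flow = map_prod f f ` flow N,
     ins = f ` ins N, outs = f ` outs N \<rparr>"

lemma rename_simps[simp]: "places (rename f N) = f ` places N" "trans (rename f N) = f ` trans N"
  "flow (rename f N) = map_prod f f ` flow N" "ins (rename f N) = f ` ins N" "outs (rename f N) = f ` outs N"
  unfolding rename_def by auto

lemma nodes_rename: "nodes (rename f N) = f ` nodes N" unfolding nodes_def by auto

lemma pre_rename: "inj f \<Longrightarrow> preset (map_prod f f ` F) (f t) = f ` preset F t"
  unfolding preset_def by (auto simp: inj_eq)
lemma post_rename: "inj f \<Longrightarrow> postset (map_prod f f ` F) (f t) = f ` postset F t"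
  unfolding postset_def by (auto simp: inj_eq)

lemma image_repeat: "image_mset f (repeat_mset k M) = repeat_mset k (image_mset f M)"
  by (induction k) auto

lemma image_inj_eq: "inj f \<Longrightarrow> image_mset f A = image_mset f B \<Longrightarrow> A = B"
  using image_mset_eq_image_mset_plusD[of f A B "{#}"] by (auto simp: inj_on_def inj_def)

lemma image_of_subset: "set_mset M \<subseteq> f ` A \<Longrightarrow> \<exists>M0. M = image_mset f M0 \<and> set_mset M0 \<subseteq> A"
proof (induction M)
  case empty thus ?case by auto
next
  case (add x M)
  then obtain M0 where "M = image_mset f M0" "set_mset M0 \<subseteq> A" by auto
  moreover obtain a where "a \<in> A" "x = f a" using add.prems by auto
  ultimately show ?case by (intro exI[of _ "add_mset a M0"]) auto
qed

context fixes f :: "'a \<Rightarrow> 'b" and N :: "'a wfnet" assumes inj: "inj f" begin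

lemma ms_ren: "mset_set (f ` S) = image_mset f (mset_set S)"
  using inj by (simp add: image_mset_mset_set inj_on_subset[of f UNIV])

lemma step_ren: "step N x y \<Longrightarrow> step (rename f N) (image_mset f x) (image_mset f y)"
proof (erule step_E)
  fix t R assume t: "t \<in> trans N" "x = mset_set (preset (flow N) t) + R" "y = R + mset_set (postset (flow N) t)"
  have "step (rename f N) (mset_set (preset (flow (rename f N)) (f t)) + image_mset f R)
     (image_mset f R + mset_set (postset (flow (rename f N)) (f t)))"
    using t(1) by (intro step_fire) auto
  thus ?thesis unfolding t rename_simps pre_rename[OF inj] post_rename[OF inj] ms_ren by simp
qed

lemma reach_ren: "reach N x y \<Longrightarrow> reach (rename f N) (image_mset f x) (image_mset f y)"
  unfolding reach_def by (induction rule: rtranclp_induct) (auto intro: rtranclp.rtrancl_into_rtrancl step_ren)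

lemma step_ren_back: "step (rename f N) (image_mset f x) y' \<Longrightarrow> \<exists>y. y' = image_mset f y \<and> step N x y"
proof (erule step_E)
  fix t' R' assume t: "t' \<in> trans (rename f N)" "image_mset f x = mset_set (preset (flow (rename f N)) t') + R'"
    "y' = R' + mset_set (postset (flow (rename f N)) t')"
  obtain t where tt: "t \<in> trans N" "t' = f t" using t(1) by auto
  have "image_mset f x = image_mset f (mset_set (preset (flow N) t)) + R'"
    using t(2) unfolding tt rename_simps pre_rename[OF inj] ms_ren .
  then obtain R where R: "x = mset_set (preset (flow N) t) + R" "R' = image_mset f R"
    using image_mset_eq_image_mset_plusD inj by (metis inj_on_subset subset_UNIV)
  have "step N x (R + mset_set (postset (flow N) t))" unfolding R using step_fire[OF tt(1)] .
  moreover have "y' = image_mset f (R + mset_set (postset (flow N) t))"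
    unfolding t(3) tt rename_simps post_rename[OF inj] ms_ren R by simp
  ultimately show ?thesis by blast
qed

lemma reach_ren_back: "reach (rename f N) (image_mset f x) y' \<Longrightarrow> \<exists>y. y' = image_mset f y \<and> reach N x y"
  unfolding reach_def
proof (induction rule: rtranclp_induct)
  case base thus ?case by auto
next
  case (step y z)
  then obtain y0 where y0: "y = image_mset f y0" "(step N)\<^sup>*\<^sup>* x y0" by auto
  obtain z0 where z0: "z = image_mset f z0" "step N y0 z0" using step_ren_back step(2) unfolding y0(1) by blast
  have "(step N)\<^sup>*\<^sup>* x z0" using y0(2) z0(2) by (rule rtranclp.rtrancl_into_rtrancl)
  thus ?case using z0(1) by blast
qed

lemma sound_ren: "sub_sound_p N \<Longrightarrow> sub_sound_p (rename f N)"
  unfolding sub_sound_p_def[of "rename f N"]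
proof (intro allI impI)
  fix k k' m' assume ss: "sub_sound_p N" and kk: "k' \<le> k" and m'P: "set_mset m' \<subseteq> places (rename f N)"
    and r: "reach (rename f N) (repeat_mset k (mset_set (ins (rename f N))))
              (m' + repeat_mset k' (mset_set (outs (rename f N))))"
  obtain m0 where m0: "m' = image_mset f m0" "set_mset m0 \<subseteq> places N" using image_of_subset m'P by force
  have "reach (rename f N) (image_mset f (repeat_mset k (mset_set (ins N))))
     (image_mset f (m0 + repeat_mset k' (mset_set (outs N))))"
    using r unfolding m0 rename_simps ms_ren by (simp add: image_repeat)
  then obtain y where y: "image_mset f (m0 + repeat_mset k' (mset_set (outs N))) = image_mset f y"
    "reach N (repeat_mset k (mset_set (ins N))) y" using reach_ren_back by blast
  have "y = m0 + repeat_mset k' (mset_set (outs N))" using image_inj_eq[OF inj y(1)] by simp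
  hence "reach N m0 (repeat_mset (k - k') (mset_set (outs N)))" using sound_use[OF ss kk m0(2)] y(2) by simp
  from reach_ren[OF this]
  show "reach (rename f N) m' (repeat_mset (k - k') (mset_set (outs (rename f N))))"
    unfolding m0 rename_simps ms_ren image_repeat .
qed

lemma wf_conn_ren: "wf_conn N \<Longrightarrow> wf_conn (rename f N)"
  unfolding wf_conn_def
proof (elim conjE, intro conjI)
  assume pn: "petri_net (places N) (trans N) (flow N)"
    and c1: "\<forall>x\<in>nodes N. \<exists>i\<in>ins N. (i, x) \<in> (flow N)\<^sup>*"
    and c2: "\<forall>x\<in>nodes N. \<exists>q\<in>outs N. (x, q) \<in> (flow N)\<^sup>*"
    and ne: "ins N \<noteq> {}" "outs N \<noteq> {}"
  show "petri_net (places (rename f N)) (trans (rename f N)) (flow (rename f N))"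
    using pn inj unfolding petri_net_def by (auto simp: inj_eq)
  show "ins (rename f N) \<noteq> {}" "outs (rename f N) \<noteq> {}" using ne by auto
  show "\<forall>x\<in>nodes (rename f N). \<exists>i\<in>ins (rename f N). (i, x) \<in> (flow (rename f N))\<^sup>*"
    using c1 rtrancl_map unfolding nodes_rename by fastforce
  show "\<forall>x\<in>nodes (rename f N). \<exists>q\<in>outs (rename f N). (x, q) \<in> (flow (rename f N))\<^sup>*"
    using c2 rtrancl_map unfolding nodes_rename by fastforce
qed

lemma pWF_ren: "pWF N \<Longrightarrow> pWF (rename f N)" unfolding pWF_def using wf_conn_ren by auto
lemma tWF_ren: "tWF N \<Longrightarrow> tWF (rename f N)" unfolding tWF_def using wf_conn_ren by auto

end

lemma pc_rename: "pc (rename Inl M) = rename (map_sum Inl id) (pc M)"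
  unfolding pc_def rename_def by (auto simp: image_Un) force+

lemma pc_subst: "pc (subst N n M) = subst (pc N) (Inl n) (rename Inl M)"
  unfolding pc_def subst_def rename_def preset_def postset_def by auto



lemma subst_wf_conn:
  assumes wN: "wf_conn N" and wM: "wf_conn M" and disj: "nodes N \<inter> nodes M = {}"
    and H: "(n \<in> places N \<and> ins M \<subseteq> places M \<and> outs M \<subseteq> places M) \<or>
            (n \<in> trans N \<and> ins M \<subseteq> trans M \<and> outs M \<subseteq> trans M)"
  shows "wf_conn (subst N n M)"
proof -
  let ?C = "subst N n M"
  let ?F = "flow N" and ?G = "flow ?C"
  have pnN: "petri_net (places N) (trans N) (flow N)" and pnM: "petri_net (places M) (trans M) (flow M)"
    using wN wM unfolding wf_conn_def by auto
  have neN: "ins N \<noteq> {}" "outs N \<noteq> {}" and neM: "ins M \<noteq> {}" "outs M \<noteq> {}"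
    using wN wM unfolding wf_conn_def by auto
  have cN1: "\<forall>x\<in>nodes N. \<exists>i\<in>ins N. (i, x) \<in> ?F\<^sup>*" and cN2: "\<forall>x\<in>nodes N. \<exists>q\<in>outs N. (x, q) \<in> ?F\<^sup>*"
    using wN unfolding wf_conn_def by auto
  have cM1: "\<forall>x\<in>nodes M. \<exists>i\<in>ins M. (i, x) \<in> (flow M)\<^sup>*" and cM2: "\<forall>x\<in>nodes M. \<exists>q\<in>outs M. (x, q) \<in> (flow M)\<^sup>*"
    using wM unfolding wf_conn_def by auto
  have insMn: "ins M \<subseteq> nodes M" "outs M \<subseteq> nodes M" using H unfolding nodes_def by auto
  have nN: "n \<in> nodes N" using H unfolding nodes_def by auto
  have GM: "(flow M)\<^sup>* \<subseteq> ?G\<^sup>*" by (rule rtrancl_mono) (auto simp: subst_def)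
  have GN: "(x,y) \<in> ?F \<Longrightarrow> x \<noteq> n \<Longrightarrow> y \<noteq> n \<Longrightarrow> (x,y) \<in> ?G" for x y by (auto simp: subst_def)
  have Gi: "(y,n) \<in> ?F \<Longrightarrow> i \<in> ins M \<Longrightarrow> (y,i) \<in> ?G" for y i by (auto simp: subst_def preset_def)
  have Go: "(n,z) \<in> ?F \<Longrightarrow> ob \<in> outs M \<Longrightarrow> (ob,z) \<in> ?G" for z ob by (auto simp: subst_def postset_def)
  have insC1: "x \<in> ins N \<Longrightarrow> x \<noteq> n \<Longrightarrow> x \<in> ins ?C" for x by (auto simp: subst_def)
  have insC2: "n \<in> ins N \<Longrightarrow> ins M \<subseteq> ins ?C" by (auto simp: subst_def)
  have outsC1: "x \<in> outs N \<Longrightarrow> x \<noteq> n \<Longrightarrow> x \<in> outs ?C" for x by (auto simp: subst_def)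
  have outsC2: "n \<in> outs N \<Longrightarrow> outs M \<subseteq> outs ?C" by (auto simp: subst_def)
  have nodesC: "nodes ?C = (nodes N - {n}) \<union> nodes M" unfolding nodes_def subst_def by auto
  define Q where "Q y \<longleftrightarrow> (y \<noteq> n \<longrightarrow> (\<exists>i\<in>ins ?C. (i,y) \<in> ?G\<^sup>*)) \<and>
     (y = n \<longrightarrow> (\<forall>w\<in>nodes M. \<exists>i\<in>ins ?C. (i,w) \<in> ?G\<^sup>*))" for y
  have Qall: "Q y" if "(i0, y) \<in> ?F\<^sup>*" "i0 \<in> ins N" for i0 y
    using that(1)
  proof (induction rule: rtrancl_induct)
    case base
    show ?case unfolding Q_def
    proof (intro conjI impI ballI)
      assume "i0 \<noteq> n" thus "\<exists>i\<in>ins ?C. (i, i0) \<in> ?G\<^sup>*" using insC1 that(2) by blast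
    next
      fix w assume "i0 = n" "w \<in> nodes M"
      thus "\<exists>i\<in>ins ?C. (i, w) \<in> ?G\<^sup>*" using cM1 insC2 that(2) GM by blast
    qed
  next
    case (step y z)
    show ?case unfolding Q_def
    proof (intro conjI impI ballI)
      assume zn: "z \<noteq> n"
      show "\<exists>i\<in>ins ?C. (i, z) \<in> ?G\<^sup>*"
      proof (cases "y = n")
        case True
        obtain ob where ob: "ob \<in> outs M" using neM by blast
        then obtain i where "i \<in> ins ?C" "(i, ob) \<in> ?G\<^sup>*" using step(3) True insMn unfolding Q_def by blast
        moreover have "(ob, z) \<in> ?G" using Go ob step(2) True by blast
        ultimately show ?thesis by (meson rtrancl.rtrancl_into_rtrancl)
      next
        case False
        then obtain i where "i \<in> ins ?C" "(i, y) \<in> ?G\<^sup>*" using step(3) unfolding Q_def by blast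
        thus ?thesis using GN[OF step(2) False zn] by (meson rtrancl.rtrancl_into_rtrancl)
      qed
    next
      fix w assume zn: "z = n" and w: "w \<in> nodes M"
      show "\<exists>i\<in>ins ?C. (i, w) \<in> ?G\<^sup>*"
      proof (cases "y = n")
        case True thus ?thesis using step(3) w unfolding Q_def by blast
      next
        case False
        then obtain i where i: "i \<in> ins ?C" "(i, y) \<in> ?G\<^sup>*" using step(3) unfolding Q_def by blast
        obtain iM where iM: "iM \<in> ins M" "(iM, w) \<in> (flow M)\<^sup>*" using cM1 w by blast
        have "(y, iM) \<in> ?G" using Gi step(2) zn iM(1) by blast
        hence "(i, iM) \<in> ?G\<^sup>*" using i(2) by (meson rtrancl.rtrancl_into_rtrancl)
        thus ?thesis using iM(2) GM i(1) by (meson rtrancl_trans subsetD)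
      qed
    qed
  qed
  define Q' where "Q' y \<longleftrightarrow> (y \<noteq> n \<longrightarrow> (\<exists>q\<in>outs ?C. (y,q) \<in> ?G\<^sup>*)) \<and>
     (y = n \<longrightarrow> (\<forall>w\<in>nodes M. \<exists>q\<in>outs ?C. (w,q) \<in> ?G\<^sup>*))" for y
  have Q'all: "Q' y" if "(y, q0) \<in> ?F\<^sup>*" "q0 \<in> outs N" for q0 y
    using that(1)
  proof (induction rule: converse_rtrancl_induct)
    case base
    show ?case unfolding Q'_def
    proof (intro conjI impI ballI)
      assume "q0 \<noteq> n" thus "\<exists>q\<in>outs ?C. (q0, q) \<in> ?G\<^sup>*" using outsC1 that(2) by blast
    next
      fix w assume "q0 = n" "w \<in> nodes M"
      thus "\<exists>q\<in>outs ?C. (w, q) \<in> ?G\<^sup>*" using cM2 outsC2 that(2) GM by blast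
    qed
  next
    case (step y z)
    show ?case unfolding Q'_def
    proof (intro conjI impI ballI)
      assume yn: "y \<noteq> n"
      show "\<exists>q\<in>outs ?C. (y, q) \<in> ?G\<^sup>*"
      proof (cases "z = n")
        case True
        obtain i where i: "i \<in> ins M" using neM by blast
        then obtain q where "q \<in> outs ?C" "(i, q) \<in> ?G\<^sup>*" using step(3) True insMn unfolding Q'_def by blast
        moreover have "(y, i) \<in> ?G" using Gi i step(1) True by blast
        ultimately show ?thesis by (meson converse_rtrancl_into_rtrancl)
      next
        case False
        then obtain q where "q \<in> outs ?C" "(z, q) \<in> ?G\<^sup>*" using step(3) unfolding Q'_def by blast
        thus ?thesis using GN[OF step(1) yn False] by (meson converse_rtrancl_into_rtrancl)
      qed
    next
      fix w assume yn: "y = n" and w: "w \<in> nodes M"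
      show "\<exists>q\<in>outs ?C. (w, q) \<in> ?G\<^sup>*"
      proof (cases "z = n")
        case True thus ?thesis using step(3) w unfolding Q'_def by blast
      next
        case False
        then obtain q where q: "q \<in> outs ?C" "(z, q) \<in> ?G\<^sup>*" using step(3) unfolding Q'_def by blast
        obtain oM where oM: "oM \<in> outs M" "(w, oM) \<in> (flow M)\<^sup>*" using cM2 w by blast
        have "(oM, z) \<in> ?G" using Go step(1) yn oM(1) by blast
        hence "(oM, q) \<in> ?G\<^sup>*" using q(2) by (meson converse_rtrancl_into_rtrancl)
        thus ?thesis using oM(2) GM q(1) by (meson rtrancl_trans subsetD)
      qed
    qed
  qed
  have conn1: "\<forall>x\<in>nodes ?C. \<exists>i\<in>ins ?C. (i, x) \<in> ?G\<^sup>*"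
  proof
    fix x assume "x \<in> nodes ?C"
    hence "x \<in> nodes N - {n} \<or> x \<in> nodes M" unfolding nodesC by blast
    thus "\<exists>i\<in>ins ?C. (i, x) \<in> ?G\<^sup>*"
    proof
      assume x: "x \<in> nodes N - {n}"
      then obtain i0 where "i0 \<in> ins N" "(i0,x) \<in> ?F\<^sup>*" using cN1 by blast
      thus ?thesis using Qall x unfolding Q_def by blast
    next
      assume x: "x \<in> nodes M"
      obtain i0 where "i0 \<in> ins N" "(i0,n) \<in> ?F\<^sup>*" using cN1 nN by blast
      thus ?thesis using Qall x unfolding Q_def by blast
    qed
  qed
  have conn2: "\<forall>x\<in>nodes ?C. \<exists>q\<in>outs ?C. (x, q) \<in> ?G\<^sup>*"
  proof
    fix x assume "x \<in> nodes ?C"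
    hence "x \<in> nodes N - {n} \<or> x \<in> nodes M" unfolding nodesC by blast
    thus "\<exists>q\<in>outs ?C. (x, q) \<in> ?G\<^sup>*"
    proof
      assume x: "x \<in> nodes N - {n}"
      then obtain q0 where "q0 \<in> outs N" "(x,q0) \<in> ?F\<^sup>*" using cN2 by blast
      thus ?thesis using Q'all x unfolding Q'_def by blast
    next
      assume x: "x \<in> nodes M"
      obtain q0 where "q0 \<in> outs N" "(n,q0) \<in> ?F\<^sup>*" using cN2 nN by blast
      thus ?thesis using Q'all x unfolding Q'_def by blast
    qed
  qed
  have ne: "ins ?C \<noteq> {}" "outs ?C \<noteq> {}" using neN neM by (auto simp: subst_def)
  have pnC: "petri_net (places ?C) (trans ?C) ?G"
  proof -
    have fin: "finite (places ?C)" "finite (trans ?C)" using pnN pnM unfolding petri_net_def subst_def by auto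
    have dj: "places ?C \<inter> trans ?C = {}" using pnN pnM disj unfolding petri_net_def subst_def nodes_def by auto
    have "?G \<subseteq> (places ?C \<times> trans ?C) \<union> (trans ?C \<times> places ?C)"
    proof
      fix e assume "e \<in> ?G"
      then obtain x y where e: "e = (x,y)" by (cases e)
      have fN: "(x,y) \<in> ?F \<Longrightarrow> (x \<in> places N \<and> y \<in> trans N) \<or> (x \<in> trans N \<and> y \<in> places N)" for x y
        using flow_cases[OF pnN] by blast
      have fM: "(x,y) \<in> flow M \<Longrightarrow> (x \<in> places M \<and> y \<in> trans M) \<or> (x \<in> trans M \<and> y \<in> places M)" for x y
        using flow_cases[OF pnM] by blast
      have PT: "places N \<inter> trans N = {}" using pnN unfolding petri_net_def by blast
      show "e \<in> (places ?C \<times> trans ?C) \<union> (trans ?C \<times> places ?C)"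
        using \<open>e \<in> ?G\<close> H PT unfolding e
        by (auto simp: subst_def preset_def postset_def dest!: fN fM)
    qed
    thus ?thesis using fin dj unfolding petri_net_def by blast
  qed
  show ?thesis unfolding wf_conn_def using pnC ne conn1 conn2 by blast
qed



lemma not_both: "pWF X \<Longrightarrow> tWF X \<Longrightarrow> False"
  unfolding pWF_def tWF_def wf_conn_def petri_net_def by blast

lemma nodes_pc: "nodes (pc N) = Inl ` nodes N \<union> {Inr False, Inr True}"
  unfolding nodes_def pc_simps by auto

lemma inj_map_sum_Inl: "inj (map_sum (Inl :: 'a \<Rightarrow> 'a + 'c) (id :: 'b \<Rightarrow> 'b))"
proof (rule injI)
  fix x y :: "'a + 'b" assume "map_sum (Inl :: 'a \<Rightarrow> 'a + 'c) id x = map_sum Inl id y"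
  thus "x = y" by (cases x; cases y) auto
qed

lemma pc_ren_sound: "sub_sound_p (pc M) \<Longrightarrow> sub_sound_p (pc (rename (Inl :: 'a \<Rightarrow> 'a + 'c) M))"
  unfolding pc_rename by (rule sound_ren[OF inj_map_sum_Inl])

theorem mainTheorem15:
  fixes N M :: "'a wfnet" and n :: 'a
  assumes "WF N" and "WF M"
    and "sub_sound N" and "sub_sound M"
    and "nodes N \<inter> nodes M = {}"
    and "(n \<in> places N \<and> pWF M) \<or> (n \<in> trans N \<and> tWF M)"
  shows "WF (subst N n M) \<and> sub_sound (subst N n M)"
proof -
  let ?C = "subst N n M"
  have wN: "wf_conn N" and wM: "wf_conn M" using assms(1,2) unfolding WF_def pWF_def tWF_def by auto
  have H: "(n \<in> places N \<and> ins M \<subseteq> places M \<and> outs M \<subseteq> places M) \<or>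
            (n \<in> trans N \<and> ins M \<subseteq> trans M \<and> outs M \<subseteq> trans M)"
    using assms(6) unfolding pWF_def tWF_def by blast
  have wC: "wf_conn ?C" by (rule subst_wf_conn[OF wN wM assms(5) H])
  have pnN: "petri_net (places N) (trans N) (flow N)" using wN unfolding wf_conn_def by blast
  have PTN: "places N \<inter> trans N = {}" using pnN unfolding petri_net_def by blast
  have ssM_p: "pWF M \<Longrightarrow> sub_sound_p M" using assms(4) not_both unfolding sub_sound_def by blast
  have ssM_t: "tWF M \<Longrightarrow> sub_sound_p (pc M)" using assms(4) not_both unfolding sub_sound_def by blast
  have injL: "inj (Inl :: 'a \<Rightarrow> 'a + bool)" by (simp add: inj_def)
  have injM: "inj (map_sum (Inl :: 'a \<Rightarrow> 'a + bool) (id :: bool \<Rightarrow> bool))"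
  proof (rule injI)
    fix x y :: "'a + bool" assume "map_sum Inl id x = map_sum Inl id y"
    thus "x = y" by (cases x; cases y) auto
  qed
  show ?thesis
  proof (cases "pWF N")
    case True
    have ssN: "sub_sound_p N" using assms(3) True not_both unfolding sub_sound_def by blast
    have io: "ins N \<subseteq> places N" "outs N \<subseteq> places N" using True unfolding pWF_def by auto
    have pC: "pWF ?C"
      using wC io H PTN unfolding pWF_def by (auto simp: subst_def)
    have "sub_sound_p ?C"
    proof (cases "n \<in> places N \<and> pWF M")
      case True
      have "psub N M n" using pnN io True ssN ssM_p assms(5) by unfold_locales auto
      thus ?thesis by (rule psub.psub_sound)
    next
      case False
      hence nt: "n \<in> trans N" "tWF M" using assms(6) by auto
      have "tsub N M n" using pnN io nt ssN ssM_t assms(5) by unfold_locales auto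
      thus ?thesis by (rule tsub.tsub_sound)
    qed
    thus ?thesis using pC unfolding WF_def sub_sound_def by blast
  next
    case False
    hence tN: "tWF N" using assms(1) unfolding WF_def by blast
    have ssN: "sub_sound_p (pc N)" using assms(3) False unfolding sub_sound_def by blast
    have io: "ins N \<subseteq> trans N" "outs N \<subseteq> trans N" using tN unfolding tWF_def by auto
    have tC: "tWF ?C"
      using wC io H PTN unfolding tWF_def by (auto simp: subst_def)
    have pP: "pWF (pc N)" using pc_pWF[OF tN] .
    have pnP: "petri_net (places (pc N)) (trans (pc N)) (flow (pc N))" using pP pWF_petri by blast
    have ioP: "ins (pc N) \<subseteq> places (pc N)" "outs (pc N) \<subseteq> places (pc N)" using pP unfolding pWF_def by auto
    have dj: "nodes (pc N) \<inter> nodes (rename Inl M) = {}"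
      using assms(5) unfolding nodes_pc nodes_rename by auto
    have "sub_sound_p (subst (pc N) (Inl n) (rename Inl M))"
    proof (cases "n \<in> places N \<and> pWF M")
      case True
      have "psub (pc N) (rename Inl M) (Inl n)"
        using pnP ioP True ssN dj pWF_ren[OF injL] sound_ren[OF injL] ssM_p
        by unfold_locales (auto simp: pc_simps)
      thus ?thesis by (rule psub.psub_sound)
    next
      case False
      hence nt: "n \<in> trans N" "tWF M" using assms(6) by auto
      have "sub_sound_p (pc (rename Inl M))"
        by (rule pc_ren_sound[OF ssM_t[OF nt(2)]])
      hence "tsub (pc N) (rename Inl M) (Inl n)"
        using pnP ioP nt ssN dj tWF_ren[OF injL]
        by unfold_locales (auto simp: pc_simps)
      thus ?thesis by (rule tsub.tsub_sound)
    qed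
    hence "sub_sound_p (pc ?C)" unfolding pc_subst .
    thus ?thesis using tC unfolding WF_def sub_sound_def by blast
  qed
qed



end
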